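(* Under the CRFE, assume additivity, i.e., the individual factorial-effect vectors $\boldsymbol{\tau}_i$ are the same for all units ($\boldsymbol{S}_{\tau\tau}=\boldsymbol{0}$). Then for each $1\le f\le F$, $\max_{1\le k\le F}\gamma^2_{fk}=\gamma^2_{ff}=R^2_f=S^{\parallel}_{11}/S_{11}$. Moreover, the squared multiple partial correlation between $\hat\tau_f$ and $\hat{\boldsymbol{\tau}}_x$ given $\hat{\boldsymbol{\tau}}_{x,f}$ is zero, i.e., the residuals from the linear projections of $\hat\tau_f$ and of $\hat{\boldsymbol{\tau}}_x$ on $\hat{\boldsymbol{\tau}}_{x,f}$ are uncorrelated. If further $n_1=\dots=n_Q=n/Q$, then $\gamma^2_{fk}=0$ for all $k\ne f$.
   Context: Setup ($2^K$ factorial experiment, finite population). $K\ge1$ two-level factors, $Q=2^K$ treatment combinations $q=1,\dots,Q$; combination $q$ sets factor $k$ at $\iota_k(q)\in\{-1,+1\}$, bijectively onto $\{-1,+1\}^K$. $F=Q-1$ factorial effects, one per nonempty $A\subseteq\{1,\dots,K\}$, enumerated $f=1,\dots,F$, with $g_{fq}=\prod_{k\in A}\iota_k(q)$; $\boldsymbol{b}_q=(g_{1q},\dots,g_{Fq})'$. Units $i=1,\dots,n$ have fixed potential outcomes $Y_i(q)$ and covariates $\boldsymbol{x}_i\in\mathbb{R}^L$; $\bar Y(q),\bar{\boldsymbol{x}}$ means; $\boldsymbol{\tau}_i=2^{-(K-1)}\sum_q\boldsymbol{b}_qY_i(q)$. Finite-population (co)variances with divisor $n-1$: $S_{11}$ variance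 of $Y(1)$; $\boldsymbol{S}_{\tau\tau}$ covariance of $\boldsymbol{\tau}_i$; $\boldsymbol{S}_{xx}$ of $\boldsymbol{x}$ (nonsingular); $\boldsymbol{S}_{q,x}$ between $Y(q)$ and $\boldsymbol{x}$. $S^{\parallel}_{11}=\boldsymbol{S}_{1,x}\boldsymbol{S}_{xx}^{-1}\boldsymbol{S}_{1,x}'$ (variance of the finite-population linear projection of $Y(1)$ on $\boldsymbol{x}$). CRFE: fixed $n_q\ge1$, $\sum n_q=n$; $\boldsymbol{Z}$ uniform over assignments with $n_q$ units in combination $q$; $\hat{\bar Y}(q),\hat{\bar{\boldsymbol{x}}}(q)$ group-$q$ means of observed outcomes $Y_i(Z_i)$ and covariates; $\hat{\boldsymbol{\tau}}=(\hat\tau_1,\dots,\hat\tau_F)'=2^{-(K-1)}\sum_q\boldsymbol{b}_q\hat{\bar Y}(q)$; $\hat{\boldsymbol{\tau}}_{x,f}=2^{-(K-1)}\sum_qg_{fq}\hat{\bar{\boldsymbol{x}}}(q)$, $\hat{\boldsymbol{\tau}}_x=(\hat{\boldsymbol{\tau}}_{x,1}',\dots,\hat{\boldsymbol{\tau}}_{x,F}')'$. All (co)variances/correlations are with respect to the CRFE randomization. $\gamma^2_{fk}=\mathrm{Cov}(\hat\tau_f,\hat{\boldsymbol{\tau}}_{x,k})\mathrm{Cov}(\hat{\boldsymbol{\tau}}_{x,k})^{-1}\mathrm{Cov}(\hat{\boldsymbol{\tau}}_{x,k},\hat\tau_f)/\mathrm{Var}(\hat\tau_f)$ is the squared multiple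 correlation between $\hat\tau_f$ and $\hat{\boldsymbol{\tau}}_{x,k}$, and $R^2_f$ the squared multiple correlation between $\hat\tau_f$ and $\hat{\boldsymbol{\tau}}_x$ (these are defined when $\mathrm{Var}(\hat\tau_f)>0$, i.e., $S_{11}>0$ under additivity). *)

theory Defs
  imports "HOL-Library.FuncSet" "Jordan_Normal_Form.Gauss_Jordan_Elimination"
begin

definition fmean :: "nat \<Rightarrow> (nat \<Rightarrow> real) \<Rightarrow> real" where
  "fmean n u = (\<Sum>i<n. u i) / real n"

definition fcov :: "nat \<Rightarrow> (nat \<Rightarrow> real) \<Rightarrow> (nat \<Rightarrow> real) \<Rightarrow> real" where
  "fcov n u v = (\<Sum>i<n. (u i - fmean n u) * (v i - fmean n v)) / (real n - 1)"

definition fcov_xx :: "nat \<Rightarrow> (nat \<Rightarrow> nat \<Rightarrow> real) \<Rightarrow> nat \<Rightarrow> real mat" where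
  "fcov_xx n x L = mat L L (\<lambda>(l, m). fcov n (\<lambda>i. x i l) (\<lambda>i. x i m))"

definition fcov_ux :: "nat \<Rightarrow> (nat \<Rightarrow> real) \<Rightarrow> (nat \<Rightarrow> nat \<Rightarrow> real) \<Rightarrow> nat \<Rightarrow> real vec" where
  "fcov_ux n u x L = vec L (\<lambda>l. fcov n u (\<lambda>i. x i l))"

definition fproj_var :: "nat \<Rightarrow> (nat \<Rightarrow> real) \<Rightarrow> (nat \<Rightarrow> nat \<Rightarrow> real) \<Rightarrow> nat \<Rightarrow> real" where
  "fproj_var n u x L =
     fcov_ux n u x L \<bullet> (the (mat_inverse (fcov_xx n x L)) *\<^sub>v fcov_ux n u x L)"

text \<open>Assignments: unit i (i < n) receives combination Z i (< Q), exactly nq q units in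
  combination q. The CRFE is the uniform distribution on this set.\<close>
definition crfe_assignments :: "nat \<Rightarrow> nat \<Rightarrow> (nat \<Rightarrow> nat) \<Rightarrow> (nat \<Rightarrow> nat) set" where
  "crfe_assignments n Q nq =
     {Z. Z \<in> {..<n} \<rightarrow>\<^sub>E {..<Q} \<and> (\<forall>q<Q. card {i\<in>{..<n}. Z i = q} = nq q)}"

definition rexp :: "(nat \<Rightarrow> nat) set \<Rightarrow> ((nat \<Rightarrow> nat) \<Rightarrow> real) \<Rightarrow> real" where
  "rexp A h = (\<Sum>Z\<in>A. h Z) / real (card A)"

definition rcov :: "(nat \<Rightarrow> nat) set \<Rightarrow> ((nat \<Rightarrow> nat) \<Rightarrow> real) \<Rightarrow> ((nat \<Rightarrow> nat) \<Rightarrow> real) \<Rightarrow> real" where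
  "rcov A u v = rexp A (\<lambda>Z. u Z * v Z) - rexp A u * rexp A v"

definition rvar :: "(nat \<Rightarrow> nat) set \<Rightarrow> ((nat \<Rightarrow> nat) \<Rightarrow> real) \<Rightarrow> real" where
  "rvar A u = rcov A u u"

definition rcov_vec :: "(nat \<Rightarrow> nat) set \<Rightarrow> ((nat \<Rightarrow> nat) \<Rightarrow> real) \<Rightarrow> (nat \<Rightarrow> (nat \<Rightarrow> nat) \<Rightarrow> real) \<Rightarrow> nat \<Rightarrow> real vec" where
  "rcov_vec A u w d = vec d (\<lambda>j. rcov A u (w j))"

definition rcov_mat :: "(nat \<Rightarrow> nat) set \<Rightarrow> (nat \<Rightarrow> (nat \<Rightarrow> nat) \<Rightarrow> real) \<Rightarrow> nat \<Rightarrow> real mat" where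
  "rcov_mat A w d = mat d d (\<lambda>(i, j). rcov A (w i) (w j))"

definition sq_mult_corr :: "(nat \<Rightarrow> nat) set \<Rightarrow> ((nat \<Rightarrow> nat) \<Rightarrow> real) \<Rightarrow> (nat \<Rightarrow> (nat \<Rightarrow> nat) \<Rightarrow> real) \<Rightarrow> nat \<Rightarrow> real" where
  "sq_mult_corr A u w d =
     (rcov_vec A u w d \<bullet> (the (mat_inverse (rcov_mat A w d)) *\<^sub>v rcov_vec A u w d)) / rvar A u"

text \<open>Residual of the linear projection of u on the random vector w (up to an additive
  constant, which does not affect covariances)\<close>
definition proj_coef :: "(nat \<Rightarrow> nat) set \<Rightarrow> ((nat \<Rightarrow> nat) \<Rightarrow> real) \<Rightarrow> (nat \<Rightarrow> (nat \<Rightarrow> nat) \<Rightarrow> real) \<Rightarrow> nat \<Rightarrow> real vec" where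
  "proj_coef A u w d = the (mat_inverse (rcov_mat A w d)) *\<^sub>v rcov_vec A u w d"

definition proj_resid :: "(nat \<Rightarrow> nat) set \<Rightarrow> ((nat \<Rightarrow> nat) \<Rightarrow> real) \<Rightarrow> (nat \<Rightarrow> (nat \<Rightarrow> nat) \<Rightarrow> real) \<Rightarrow> nat \<Rightarrow> (nat \<Rightarrow> nat) \<Rightarrow> real" where
  "proj_resid A u w d = (\<lambda>Z. u Z - (\<Sum>j<d. proj_coef A u w d $ j * w j Z))"

definition group_mean :: "nat \<Rightarrow> (nat \<Rightarrow> nat \<Rightarrow> real) \<Rightarrow> (nat \<Rightarrow> nat) \<Rightarrow> nat \<Rightarrow> real" where
  "group_mean n V Z q = (\<Sum>i\<in>{i\<in>{..<n}. Z i = q}. V i q) / real (card {i\<in>{..<n}. Z i = q})"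

definition fact_est :: "nat \<Rightarrow> nat \<Rightarrow> (nat \<Rightarrow> nat \<Rightarrow> real) \<Rightarrow> nat \<Rightarrow> (nat \<Rightarrow> nat \<Rightarrow> real) \<Rightarrow> nat \<Rightarrow> (nat \<Rightarrow> nat) \<Rightarrow> real" where
  "fact_est K Q g n V f Z = (1 / 2 ^ (K - 1)) * (\<Sum>q<Q. g f q * group_mean n V Z q)"

definition indiv_effect :: "nat \<Rightarrow> nat \<Rightarrow> (nat \<Rightarrow> nat \<Rightarrow> real) \<Rightarrow> (nat \<Rightarrow> nat \<Rightarrow> real) \<Rightarrow> nat \<Rightarrow> nat \<Rightarrow> real" where
  "indiv_effect K Q g Y i f = (1 / 2 ^ (K - 1)) * (\<Sum>q<Q. g f q * Y i q)"

end

theory Submission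
  imports Defs "Jordan_Normal_Form.Determinant"
begin

definition sw :: "nat \<Rightarrow> nat \<Rightarrow> nat \<Rightarrow> nat" where
  "sw a b i = (if i = a then b else if i = b then a else i)"

lemma sw_sw[simp]: "sw a b (sw a b i) = i" by (simp add: sw_def)
lemma sw_lt: "a < n \<Longrightarrow> b < n \<Longrightarrow> i < n \<Longrightarrow> sw a b i < n" by (simp add: sw_def)
lemma sw_ge: "a < n \<Longrightarrow> b < n \<Longrightarrow> \<not> i < n \<Longrightarrow> sw a b i = i" by (auto simp add: sw_def)

lemma crfe_finite: "finite (crfe_assignments n Q nq)"
proof -
  have "crfe_assignments n Q nq \<subseteq> {..<n} \<rightarrow>\<^sub>E {..<Q}" unfolding crfe_assignments_def by auto
  moreover have "finite ({..<n} \<rightarrow>\<^sub>E {..<Q})" by (intro finite_PiE) auto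
  ultimately show ?thesis by (rule finite_subset)
qed

lemma crfe_sum_units:
  assumes "Z \<in> crfe_assignments n Q nq"
  shows "(\<Sum>i<n. \<phi> (Z i)) = (\<Sum>q<Q. real (nq q) * \<phi> q)"
proof -
  have Zin: "Z ` {..<n} \<subseteq> {..<Q}" using assms unfolding crfe_assignments_def by auto
  have "(\<Sum>i<n. \<phi> (Z i)) = (\<Sum>q<Q. \<Sum>i\<in>{i. i \<in> {..<n} \<and> Z i = q}. \<phi> (Z i))"
    by (rule sum.group[symmetric]) (use Zin in auto)
  also have "\<dots> = (\<Sum>q<Q. real (nq q) * \<phi> q)"
  proof (rule sum.cong[OF refl])
    fix q assume q: "q \<in> {..<Q}"
    have "(\<Sum>i\<in>{i. i \<in> {..<n} \<and> Z i = q}. \<phi> (Z i)) = (\<Sum>i\<in>{i. i \<in> {..<n} \<and> Z i = q}. \<phi> q)"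
      by (rule sum.cong) auto
    also have "\<dots> = real (card {i\<in>{..<n}. Z i = q}) * \<phi> q" by simp
    also have "card {i\<in>{..<n}. Z i = q} = nq q" using assms q unfolding crfe_assignments_def by auto
    finally show "(\<Sum>i\<in>{i. i \<in> {..<n} \<and> Z i = q}. \<phi> (Z i)) = real (nq q) * \<phi> q" .
  qed
  finally show ?thesis .
qed

lemma crfe_swap_mem:
  assumes a: "a < n" and b: "b < n" and Z: "Z \<in> crfe_assignments n Q nq"
  shows "(\<lambda>i. Z (sw a b i)) \<in> crfe_assignments n Q nq"
proof -
  have ZP: "Z \<in> {..<n} \<rightarrow>\<^sub>E {..<Q}" and Zc: "\<forall>q<Q. card {i\<in>{..<n}. Z i = q} = nq q"
    using Z unfolding crfe_assignments_def by auto
  have "(\<lambda>i. Z (sw a b i)) \<in> {..<n} \<rightarrow>\<^sub>E {..<Q}"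
    using ZP sw_lt[OF a b] sw_ge[OF a b] by (auto simp: PiE_def Pi_def extensional_def)
  moreover have "card {i\<in>{..<n}. Z (sw a b i) = q} = nq q" if q: "q < Q" for q
  proof -
    have "{i\<in>{..<n}. Z (sw a b i) = q} = sw a b ` {i\<in>{..<n}. Z i = q}"
    proof
      show "{i \<in> {..<n}. Z (sw a b i) = q} \<subseteq> sw a b ` {i \<in> {..<n}. Z i = q}"
      proof
        fix i assume "i \<in> {i \<in> {..<n}. Z (sw a b i) = q}"
        then show "i \<in> sw a b ` {i \<in> {..<n}. Z i = q}"
          using sw_lt[OF a b] by (intro image_eqI[of _ _ "sw a b i"]) auto
      qed
    next
      show "sw a b ` {i \<in> {..<n}. Z i = q} \<subseteq> {i \<in> {..<n}. Z (sw a b i) = q}"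
        using sw_lt[OF a b] by auto
    qed
    moreover have "inj (sw a b)" by (metis injI sw_sw)
    ultimately show ?thesis using Zc q by (simp add: card_image inj_on_subset)
  qed
  ultimately show ?thesis unfolding crfe_assignments_def by auto
qed

lemma crfe_swap_sum:
  assumes a: "a < n" and b: "b < n"
  shows "(\<Sum>Z\<in>crfe_assignments n Q nq. H Z) = (\<Sum>Z\<in>crfe_assignments n Q nq. H (\<lambda>i. Z (sw a b i)))"
proof -
  let ?A = "crfe_assignments n Q nq"
  have "bij_betw (\<lambda>Z i. Z (sw a b i)) ?A ?A"
    by (rule bij_betw_byWitness[where f' = "\<lambda>Z i. Z (sw a b i)"])
       (auto intro: crfe_swap_mem[OF a b])
  then show ?thesis by (rule sum.reindex_bij_betw[symmetric])
qed

lemma crfe_T1_const: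
  assumes "i < n" "j < n"
  shows "(\<Sum>Z\<in>crfe_assignments n Q nq. \<phi> (Z i)) = (\<Sum>Z\<in>crfe_assignments n Q nq. \<phi> (Z j))"
  using crfe_swap_sum[OF assms, of "\<lambda>Z. \<phi> (Z j)" Q nq] by (simp add: sw_def)

lemma crfe_T2_swap:
  assumes "a < n" "b < n"
  shows "(\<Sum>Z\<in>crfe_assignments n Q nq. \<phi> (Z i) * \<psi> (Z j))
       = (\<Sum>Z\<in>crfe_assignments n Q nq. \<phi> (Z (sw a b i)) * \<psi> (Z (sw a b j)))"
  using crfe_swap_sum[OF assms, of "\<lambda>Z. \<phi> (Z i) * \<psi> (Z j)" Q nq] by simp

lemma crfe_T2_const:
  assumes "i < n" "j < n" "i \<noteq> j" "i' < n" "j' < n" "i' \<noteq> j'"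
  shows "(\<Sum>Z\<in>crfe_assignments n Q nq. \<phi> (Z i) * \<psi> (Z j))
       = (\<Sum>Z\<in>crfe_assignments n Q nq. \<phi> (Z i') * \<psi> (Z j'))"
proof -
  define j1 where "j1 = sw i i' j"
  have si: "sw i i' i = i'" by (simp add: sw_def)
  have j1n: "j1 < n" using assms by (simp add: j1_def sw_lt)
  have j1i: "j1 \<noteq> i'" using assms unfolding j1_def sw_def by auto
  have s2i: "sw j1 j' i' = i'" using j1i assms by (simp add: sw_def)
  have s2j: "sw j1 j' j1 = j'" by (simp add: sw_def)
  have "(\<Sum>Z\<in>crfe_assignments n Q nq. \<phi> (Z i) * \<psi> (Z j))
       = (\<Sum>Z\<in>crfe_assignments n Q nq. \<phi> (Z i') * \<psi> (Z j1))"
    using crfe_T2_swap[OF assms(1) assms(4), of \<phi> i \<psi> j Q nq] si j1_def by simp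
  also have "\<dots> = (\<Sum>Z\<in>crfe_assignments n Q nq. \<phi> (Z i') * \<psi> (Z j'))"
    using crfe_T2_swap[OF j1n assms(5), of \<phi> i' \<psi> j1 Q nq] s2i s2j by simp
  finally show ?thesis .
qed


lemma exists_assign:
  fixes m N :: nat and nq :: "nat \<Rightarrow> nat"
  shows "(\<Sum>q<m. nq q) = N \<Longrightarrow> \<exists>Z. Z \<in> {..<N} \<rightarrow>\<^sub>E {..<m} \<and> (\<forall>q<m. card {i\<in>{..<N}. Z i = q} = nq q)"
proof (induction m arbitrary: N)
  case 0
  then show ?case by (intro exI[of _ "\<lambda>_. undefined"]) auto
next
  case (Suc m)
  define N' where "N' = (\<Sum>q<m. nq q)"
  have N: "N = N' + nq m" using Suc.prems by (simp add: N'_def)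
  obtain Z' where Z': "Z' \<in> {..<N'} \<rightarrow>\<^sub>E {..<m}" "\<forall>q<m. card {i\<in>{..<N'}. Z' i = q} = nq q"
    using Suc.IH[OF N'_def[symmetric]] by blast
  define Z where "Z = (\<lambda>i. if i < N' then Z' i else if i < N then m else undefined)"
  have "Z \<in> {..<N} \<rightarrow>\<^sub>E {..<Suc m}"
    using Z'(1) N unfolding Z_def by (auto simp: PiE_def Pi_def extensional_def)
  moreover have "card {i\<in>{..<N}. Z i = q} = nq q" if q: "q < Suc m" for q
  proof (cases "q < m")
    case True
    have "{i\<in>{..<N}. Z i = q} = {i\<in>{..<N'}. Z' i = q}"
      using True N unfolding Z_def by auto
    then show ?thesis using Z'(2) True by simp
  next
    case False
    then have qm: "q = m" using q by simp
    have Zlt: "\<forall>i<N'. Z' i < m" using Z'(1) by (auto simp: PiE_def Pi_def)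
    have "{i\<in>{..<N}. Z i = q} = {N'..<N}"
    proof -
      have "i \<in> {N'..<N}" if "i \<in> {i\<in>{..<N}. Z i = q}" for i
        using that Zlt qm unfolding Z_def by (auto split: if_splits)
      moreover have "i \<in> {i\<in>{..<N}. Z i = q}" if "i \<in> {N'..<N}" for i
        using that qm unfolding Z_def by auto
      ultimately show ?thesis by blast
    qed
    then show ?thesis using N qm by simp
  qed
  ultimately show ?case by blast
qed

lemma crfe_nonempty:
  assumes "(\<Sum>q<Q. nq q) = n"
  shows "crfe_assignments n Q nq \<noteq> {}"
  using exists_assign[OF assms] unfolding crfe_assignments_def by blast

lemma crfe_T1:
  assumes i: "i < n"
  shows "real n * (\<Sum>Z\<in>crfe_assignments n Q nq. \<phi> (Z i))
       = real (card (crfe_assignments n Q nq)) * (\<Sum>q<Q. real (nq q) * \<phi> q)"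
proof -
  let ?A = "crfe_assignments n Q nq"
  have "real n * (\<Sum>Z\<in>?A. \<phi> (Z i)) = (\<Sum>i'<n. \<Sum>Z\<in>?A. \<phi> (Z i'))"
    using crfe_T1_const[OF _ i, of _ \<phi> Q nq] by simp
  also have "\<dots> = (\<Sum>Z\<in>?A. \<Sum>i'<n. \<phi> (Z i'))" by (rule sum.swap)
  also have "\<dots> = (\<Sum>Z\<in>?A. (\<Sum>q<Q. real (nq q) * \<phi> q))"
    by (rule sum.cong[OF refl]) (rule crfe_sum_units)
  finally show ?thesis by simp
qed

lemma crfe_T2:
  assumes i: "i < n" and j: "j < n" and ij: "i \<noteq> j"
  shows "real n * (real n - 1) * (\<Sum>Z\<in>crfe_assignments n Q nq. \<phi> (Z i) * \<psi> (Z j))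
       = real (card (crfe_assignments n Q nq)) *
          ((\<Sum>q<Q. real (nq q) * \<phi> q) * (\<Sum>q<Q. real (nq q) * \<psi> q) - (\<Sum>q<Q. real (nq q) * (\<phi> q * \<psi> q)))"
proof -
  let ?A = "crfe_assignments n Q nq"
  let ?O = "(\<Sum>Z\<in>?A. \<phi> (Z i) * \<psi> (Z j))"
  let ?T = "\<lambda>i' j'. (\<Sum>Z\<in>?A. \<phi> (Z i') * \<psi> (Z j'))"
  have row: "(\<Sum>j'<n. ?T i' j') = ?T i' i' + (real n - 1) * ?O" if i': "i' < n" for i'
  proof -
    have "(\<Sum>j'<n. ?T i' j') = ?T i' i' + (\<Sum>j'\<in>{..<n}-{i'}. ?T i' j')"
      using i' by (subst sum.remove[of _ i']) auto
    also have "(\<Sum>j'\<in>{..<n}-{i'}. ?T i' j') = (\<Sum>j'\<in>{..<n}-{i'}. ?O)"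
      by (rule sum.cong[OF refl]) (use i' i j ij in \<open>auto intro!: crfe_T2_const\<close>)
    also have "\<dots> = (real n - 1) * ?O" using i' by (simp add: of_nat_diff)
    finally show ?thesis .
  qed
  have "(\<Sum>i'<n. \<Sum>j'<n. ?T i' j') = (\<Sum>i'<n. ?T i' i') + real n * (real n - 1) * ?O"
    using row by (simp add: sum.distrib)
  moreover have "(\<Sum>i'<n. ?T i' i') = real (card ?A) * (\<Sum>q<Q. real (nq q) * (\<phi> q * \<psi> q))"
  proof -
    have "(\<Sum>i'<n. ?T i' i') = (\<Sum>Z\<in>?A. \<Sum>i'<n. \<phi> (Z i') * \<psi> (Z i'))" by (rule sum.swap)
    also have "\<dots> = (\<Sum>Z\<in>?A. (\<Sum>q<Q. real (nq q) * (\<phi> q * \<psi> q)))"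
      by (rule sum.cong[OF refl]) (rule crfe_sum_units[where \<phi> = "\<lambda>q. \<phi> q * \<psi> q"])
    finally show ?thesis by simp
  qed
  moreover have "(\<Sum>i'<n. \<Sum>j'<n. ?T i' j') =
     real (card ?A) * ((\<Sum>q<Q. real (nq q) * \<phi> q) * (\<Sum>q<Q. real (nq q) * \<psi> q))"
  proof -
    have "(\<Sum>i'<n. \<Sum>j'<n. ?T i' j') = (\<Sum>Z\<in>?A. \<Sum>i'<n. \<Sum>j'<n. \<phi> (Z i') * \<psi> (Z j'))"
      by (simp add: sum.swap[of _ "{..<n}" ?A] sum.swap[of _ "{..<n}" ?A])
    also have "\<dots> = (\<Sum>Z\<in>?A. (\<Sum>i'<n. \<phi> (Z i')) * (\<Sum>j'<n. \<psi> (Z j')))"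
      by (simp add: sum_product)
    also have "\<dots> = (\<Sum>Z\<in>?A. ((\<Sum>q<Q. real (nq q) * \<phi> q) * (\<Sum>q<Q. real (nq q) * \<psi> q)))"
      by (rule sum.cong[OF refl]) (simp add: crfe_sum_units)
    finally show ?thesis by simp
  qed
  ultimately show ?thesis by (simp add: algebra_simps)
qed


definition stat :: "nat \<Rightarrow> (nat \<Rightarrow> real) \<Rightarrow> (nat \<Rightarrow> real) \<Rightarrow> (nat \<Rightarrow> nat) \<Rightarrow> real" where
  "stat n u \<phi> Z = (\<Sum>i<n. u i * \<phi> (Z i))"

lemma fcov_alt:
  assumes "n > 0"
  shows "fcov n u v = ((\<Sum>i<n. u i * v i) - (\<Sum>i<n. u i) * (\<Sum>i<n. v i) / real n) / (real n - 1)"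
proof -
  define a where "a = (\<Sum>i<n. u i) / real n"
  define b where "b = (\<Sum>i<n. v i) / real n"
  have "(\<Sum>i<n. (u i - a) * (v i - b)) = (\<Sum>i<n. u i * v i - b * u i - a * v i + a * b)"
    by (rule sum.cong) (auto simp: algebra_simps)
  also have "\<dots> = (\<Sum>i<n. u i * v i) - b * (\<Sum>i<n. u i) - a * (\<Sum>i<n. v i) + real n * a * b"
    by (simp add: sum.distrib sum_subtractf sum_distrib_left)
  also have "\<dots> = (\<Sum>i<n. u i * v i) - (\<Sum>i<n. u i) * (\<Sum>i<n. v i) / real n"
    using assms by (simp add: a_def b_def field_simps)
  finally show ?thesis unfolding fcov_def fmean_def a_def b_def by simp
qed

lemma rexp_cong: "(\<And>Z. Z \<in> A \<Longrightarrow> h Z = h' Z) \<Longrightarrow> rexp A h = rexp A h'"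
  unfolding rexp_def by (simp cong: sum.cong)

lemma rcov_cong:
  assumes "\<And>Z. Z \<in> A \<Longrightarrow> X Z = X' Z" "\<And>Z. Z \<in> A \<Longrightarrow> Y Z = Y' Z"
  shows "rcov A X Y = rcov A X' Y'"
proof -
  have "rexp A (\<lambda>Z. X Z * Y Z) = rexp A (\<lambda>Z. X' Z * Y' Z)" by (rule rexp_cong) (simp add: assms)
  moreover have "rexp A X = rexp A X'" by (rule rexp_cong) (simp add: assms)
  moreover have "rexp A Y = rexp A Y'" by (rule rexp_cong) (simp add: assms)
  ultimately show ?thesis unfolding rcov_def by simp
qed

lemma rexp_const: "finite A \<Longrightarrow> A \<noteq> {} \<Longrightarrow> rexp A (\<lambda>Z. c) = c"
  unfolding rexp_def by simp

lemma rexp_add: "rexp A (\<lambda>Z. h Z + h' Z) = rexp A h + rexp A h'"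
  unfolding rexp_def by (simp add: sum.distrib add_divide_distrib)

lemma rexp_scale: "rexp A (\<lambda>Z. c * h Z) = c * rexp A h"
  unfolding rexp_def by (simp add: sum_distrib_left)

lemma rexp_diff: "rexp A (\<lambda>Z. h Z - h' Z) = rexp A h - rexp A h'"
  unfolding rexp_def by (simp add: sum_subtractf diff_divide_distrib)

lemma rexp_sum: "rexp A (\<lambda>Z. \<Sum>j\<in>J. h j Z) = (\<Sum>j\<in>J. rexp A (h j))"
  unfolding rexp_def by (simp add: sum.swap[of _ A J] sum_divide_distrib)

lemma rcov_shift:
  assumes "finite A" "A \<noteq> {}"
  shows "rcov A (\<lambda>Z. X Z + c1) (\<lambda>Z. Y Z + c2) = rcov A X Y"
proof -
  have e1: "rexp A (\<lambda>Z. X Z + c1) = rexp A X + c1" using assms by (simp add: rexp_add rexp_const)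
  have e2: "rexp A (\<lambda>Z. Y Z + c2) = rexp A Y + c2" using assms by (simp add: rexp_add rexp_const)
  have "rexp A (\<lambda>Z. (X Z + c1) * (Y Z + c2)) = rexp A (\<lambda>Z. X Z * Y Z + (c2 * X Z + (c1 * Y Z + c1 * c2)))"
    by (simp add: algebra_simps)
  also have "\<dots> = rexp A (\<lambda>Z. X Z * Y Z) + c2 * rexp A X + c1 * rexp A Y + c1 * c2"
    using assms by (simp add: rexp_add rexp_scale rexp_const)
  finally show ?thesis unfolding rcov_def e1 e2 by (simp add: algebra_simps)
qed

lemma div_solve: "(d::real) \<noteq> 0 \<Longrightarrow> d * T = X \<Longrightarrow> T = X / d"
  by (simp add: eq_divide_eq mult.commute)

lemma rexp_stat:
  assumes n: "n > 0" and z: "(\<Sum>q<Q. real (nq q) * \<phi> q) = 0"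
  shows "rexp (crfe_assignments n Q nq) (stat n u \<phi>) = 0"
proof -
  let ?A = "crfe_assignments n Q nq"
  have T: "(\<Sum>Z\<in>?A. \<phi> (Z i)) = 0" if "i < n" for i
    using crfe_T1[OF that, where Q=Q and nq=nq and \<phi>=\<phi>] z n by simp
  have "(\<Sum>Z\<in>?A. stat n u \<phi> Z) = (\<Sum>i<n. u i * (\<Sum>Z\<in>?A. \<phi> (Z i)))"
    unfolding stat_def by (simp add: sum.swap[of _ ?A] sum_distrib_left)
  also have "\<dots> = 0" using T by simp
  finally show ?thesis unfolding rexp_def by simp
qed

lemma rexp_stat2:
  assumes n: "n \<ge> 2" and ne: "crfe_assignments n Q nq \<noteq> {}"
    and z1: "(\<Sum>q<Q. real (nq q) * \<phi> q) = 0" and z2: "(\<Sum>q<Q. real (nq q) * \<psi> q) = 0"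
  shows "rexp (crfe_assignments n Q nq) (\<lambda>Z. stat n u \<phi> Z * stat n v \<psi> Z)
       = (\<Sum>q<Q. real (nq q) * (\<phi> q * \<psi> q)) * fcov n u v"
proof -
  let ?A = "crfe_assignments n Q nq"
  let ?k = "(\<Sum>q<Q. real (nq q) * (\<phi> q * \<psi> q))"
  let ?c = "real (card ?A)"
  have cpos: "?c > 0" using ne crfe_finite[of n Q nq] by (simp add: card_gt_0_iff)
  have nr: "real n \<ge> 2" using n by simp
  define D where "D = ?c * ?k / real n"
  define Oo where "Oo = - ?c * ?k / (real n * (real n - 1))"
  let ?T = "\<lambda>i j. (\<Sum>Z\<in>?A. \<phi> (Z i) * \<psi> (Z j))"
  have TD: "?T i i = D" if "i < n" for i
    using crfe_T1[OF that, where Q=Q and nq=nq and \<phi>="\<lambda>q. \<phi> q * \<psi> q"] nr unfolding D_def by (simp add: eq_divide_eq mult.commute)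
  have nn: "real n * (real n - 1) \<noteq> 0" using nr by simp
  have TO: "?T i j = Oo" if "i < n" "j < n" "i \<noteq> j" for i j
  proof -
    have H: "real n * (real n - 1) * ?T i j = - (?c * ?k)"
      using crfe_T2[OF that, where Q=Q and nq=nq and \<phi>=\<phi> and \<psi>=\<psi>] z1 z2 by simp
    show ?thesis unfolding Oo_def using div_solve[OF nn H] by simp
  qed
  have row: "(\<Sum>j<n. v j * ?T i j) = v i * (D - Oo) + Oo * (\<Sum>j<n. v j)" if i: "i < n" for i
  proof -
    have "(\<Sum>j<n. v j * ?T i j) = (\<Sum>j<n. v j * Oo + (if j = i then v j * (D - Oo) else 0))"
      by (rule sum.cong[OF refl]) (use i TD TO in \<open>auto simp: algebra_simps\<close>)
    also have "\<dots> = Oo * (\<Sum>j<n. v j) + v i * (D - Oo)"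
      using i by (simp add: sum.distrib sum_distrib_left mult.commute)
    finally show ?thesis by simp
  qed
  have "(\<Sum>Z\<in>?A. stat n u \<phi> Z * stat n v \<psi> Z) = (\<Sum>i<n. u i * (\<Sum>j<n. v j * ?T i j))"
  proof -
    have "(\<Sum>Z\<in>?A. stat n u \<phi> Z * stat n v \<psi> Z) = (\<Sum>Z\<in>?A. \<Sum>i<n. \<Sum>j<n. u i * (v j * (\<phi> (Z i) * \<psi> (Z j))))"
      unfolding stat_def sum_product by (simp add: mult_ac)
    also have "\<dots> = (\<Sum>i<n. \<Sum>j<n. \<Sum>Z\<in>?A. u i * (v j * (\<phi> (Z i) * \<psi> (Z j))))"
      by (simp add: sum.swap[of _ ?A])
    also have "\<dots> = (\<Sum>i<n. u i * (\<Sum>j<n. v j * ?T i j))"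
      by (simp add: sum_distrib_left)
    finally show ?thesis .
  qed
  also have "\<dots> = (\<Sum>i<n. (D - Oo) * (u i * v i) + (Oo * (\<Sum>j<n. v j)) * u i)"
    by (rule sum.cong[OF refl]) (simp add: row algebra_simps)
  also have "\<dots> = (D - Oo) * (\<Sum>i<n. u i * v i) + (Oo * (\<Sum>j<n. v j)) * (\<Sum>i<n. u i)"
    by (simp add: sum.distrib sum_distrib_left)
  finally have S: "(\<Sum>Z\<in>?A. stat n u \<phi> Z * stat n v \<psi> Z) = \<dots>" .
  have DO: "D - Oo = ?c * ?k / (real n - 1)"
    using nr unfolding D_def Oo_def by (simp add: field_simps)
  have ar: "((c * k / d) * a + (- c * k / (m * d) * vv) * uu) / c = k * ((a - uu * vv / m) / d)"
    if "c \<noteq> 0" "m \<noteq> 0" "d \<noteq> 0" for a uu vv c k m d :: real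
    using that by (simp add: field_simps)
  have h3: "?c \<noteq> 0" "real n \<noteq> 0" "real n - 1 \<noteq> 0" using cpos nr by auto
  have "rexp ?A (\<lambda>Z. stat n u \<phi> Z * stat n v \<psi> Z) = ((D - Oo) * (\<Sum>i<n. u i * v i) + (Oo * (\<Sum>j<n. v j)) * (\<Sum>i<n. u i)) / ?c"
    unfolding rexp_def S ..
  also have "\<dots> = ((?c * ?k / (real n - 1)) * (\<Sum>i<n. u i * v i) + (- ?c * ?k / (real n * (real n - 1)) * (\<Sum>j<n. v j)) * (\<Sum>i<n. u i)) / ?c"
    by (subst DO) (simp only: Oo_def)
  also have "\<dots> = ?k * (((\<Sum>i<n. u i * v i) - (\<Sum>i<n. u i) * (\<Sum>j<n. v j) / real n) / (real n - 1))"
    by (rule ar[OF h3])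
  also have "\<dots> = ?k * fcov n u v" using fcov_alt[of n u v] n by simp
  finally show ?thesis .
qed

lemma rcov_stat:
  assumes n: "n \<ge> 2" and ne: "crfe_assignments n Q nq \<noteq> {}"
    and z1: "(\<Sum>q<Q. real (nq q) * \<phi> q) = 0" and z2: "(\<Sum>q<Q. real (nq q) * \<psi> q) = 0"
    and X: "\<And>Z. Z \<in> crfe_assignments n Q nq \<Longrightarrow> X Z = stat n u \<phi> Z + c1"
    and W: "\<And>Z. Z \<in> crfe_assignments n Q nq \<Longrightarrow> W Z = stat n v \<psi> Z + c2"
  shows "rcov (crfe_assignments n Q nq) X W = (\<Sum>q<Q. real (nq q) * (\<phi> q * \<psi> q)) * fcov n u v"
proof -
  let ?A = "crfe_assignments n Q nq"
  have "rcov ?A X W = rcov ?A (\<lambda>Z. stat n u \<phi> Z + c1) (\<lambda>Z. stat n v \<psi> Z + c2)"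
    by (rule rcov_cong) (auto simp: X W)
  also have "\<dots> = rcov ?A (stat n u \<phi>) (stat n v \<psi>)"
    by (rule rcov_shift[OF crfe_finite ne])
  also have "\<dots> = (\<Sum>q<Q. real (nq q) * (\<phi> q * \<psi> q)) * fcov n u v"
    unfolding rcov_def using rexp_stat2[OF n ne z1 z2] rexp_stat[where n=n and Q=Q and nq=nq and \<phi>=\<phi> and u=u] n z1 by simp
  finally show ?thesis .
qed


context
  fixes K :: nat and iota :: "nat \<Rightarrow> nat \<Rightarrow> real" and eff :: "nat \<Rightarrow> nat set"
  assumes iota: "bij_betw (\<lambda>q. restrict (iota q) {..<K}) {..<2^K} ({..<K} \<rightarrow>\<^sub>E {-1, 1})"
    and eff: "bij_betw eff {..<2^K-1} {S. S \<subseteq> {..<K} \<and> S \<noteq> {}}"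
begin

lemma iota_val: "q < 2^K \<Longrightarrow> k < K \<Longrightarrow> iota q k = -1 \<or> iota q k = 1"
proof -
  assume q: "q < 2^K" and k: "k < K"
  have "restrict (iota q) {..<K} \<in> {..<K} \<rightarrow>\<^sub>E {-1, 1}"
    using bij_betwE[OF iota] q by auto
  then have "restrict (iota q) {..<K} k \<in> {-1, 1}" using k by (auto dest: PiE_mem)
  then show ?thesis using k by simp
qed

lemma iota_sq: assumes "q < 2^K" "k < K" shows "iota q k * iota q k = 1"
  using iota_val[OF assms] by auto

lemma eff_sub: "f < 2^K - 1 \<Longrightarrow> eff f \<subseteq> {..<K}"
  using eff unfolding bij_betw_def by auto

lemma eff_ne: "f < 2^K - 1 \<Longrightarrow> eff f \<noteq> {}"
  using eff unfolding bij_betw_def by auto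

lemma prod_sq1: "q < 2^K \<Longrightarrow> S \<subseteq> {..<K} \<Longrightarrow> (\<Prod>k\<in>S. iota q k) * (\<Prod>k\<in>S. iota q k) = 1"
  by (subst prod.distrib[symmetric]) (auto intro!: prod.neutral iota_sq)

lemma walsh0:
  assumes S: "S \<subseteq> {..<K}" "S \<noteq> {}"
  shows "(\<Sum>q<2^K. \<Prod>k\<in>S. iota q k) = 0"
proof -
  let ?h = "\<lambda>\<sigma>. \<Prod>k<K. (if k \<in> S then \<sigma> k else 1::real)"
  have hh: "(\<Prod>k\<in>S. iota q k) = ?h (restrict (iota q) {..<K})" for q
  proof -
    have "?h (restrict (iota q) {..<K}) = (\<Prod>k\<in>{..<K} \<inter> S. iota q k)"
      by (subst prod.inter_restrict) (auto intro!: prod.cong)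
    also have "{..<K} \<inter> S = S" using S by auto
    finally show ?thesis by simp
  qed
  have "(\<Sum>q<2^K. \<Prod>k\<in>S. iota q k) = (\<Sum>q<2^K. ?h (restrict (iota q) {..<K}))"
    by (simp add: hh)
  also have "\<dots> = (\<Sum>\<sigma>\<in>{..<K} \<rightarrow>\<^sub>E {-1, 1}. ?h \<sigma>)"
    by (rule sum.reindex_bij_betw[OF iota])
  also have "\<dots> = (\<Prod>k<K. \<Sum>b\<in>{-1, 1}. (if k \<in> S then b else 1::real))"
    by (rule prod_sum_PiE[symmetric]) auto
  also have "\<dots> = 0"
  proof -
    obtain k0 where k0: "k0 \<in> S" using S by auto
    have "k0 < K" using k0 S by auto
    moreover have "(\<Sum>b\<in>{-1, 1}. (if k0 \<in> S then b else 1::real)) = 0" using k0 by simp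
    ultimately show ?thesis
      apply (intro prod_zero)
       apply simp
      apply (rule bexI[of _ k0])
      using k0 apply simp
      by simp
  qed
  finally show ?thesis .
qed

lemma prod_symdiff:
  assumes q: "q < 2^K" and A: "A \<subseteq> {..<K}" and B: "B \<subseteq> {..<K}"
  shows "(\<Prod>k\<in>A. iota q k) * (\<Prod>k\<in>B. iota q k) = (\<Prod>k\<in>(A - B) \<union> (B - A). iota q k)"
proof -
  have fA: "finite A" and fB: "finite B" using A B finite_subset by blast+
  have "(\<Prod>k\<in>A. iota q k) = (\<Prod>k\<in>A \<inter> B. iota q k) * (\<Prod>k\<in>A - B. iota q k)"
    by (rule prod.Int_Diff[OF fA])
  moreover have "(\<Prod>k\<in>B. iota q k) = (\<Prod>k\<in>A \<inter> B. iota q k) * (\<Prod>k\<in>B - A. iota q k)"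
    using prod.Int_Diff[OF fB, of _ A] by (simp add: Int_commute)
  moreover have "(\<Prod>k\<in>(A - B) \<union> (B - A). iota q k) = (\<Prod>k\<in>A - B. iota q k) * (\<Prod>k\<in>B - A. iota q k)"
    by (rule prod.union_disjoint) (use fA fB in auto)
  moreover have "(\<Prod>k\<in>A \<inter> B. iota q k) * (\<Prod>k\<in>A \<inter> B. iota q k) = 1"
    by (rule prod_sq1[OF q]) (use A in auto)
  ultimately show ?thesis by (simp add: algebra_simps)
qed

lemma g_sq: assumes "f < 2^K - 1" "q < 2^K" shows "(\<Prod>k\<in>eff f. iota q k) * (\<Prod>k\<in>eff f. iota q k) = 1"
  using prod_sq1[OF assms(2) eff_sub[OF assms(1)]] .

lemma g_sum0: assumes "f < 2^K - 1" shows "(\<Sum>q<2^K. \<Prod>k\<in>eff f. iota q k) = 0"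
  using walsh0[OF eff_sub[OF assms] eff_ne[OF assms]] .

lemma g_row_orth:
  assumes f: "f < 2^K - 1" and k: "k < 2^K - 1" and fk: "f \<noteq> k"
  shows "(\<Sum>q<2^K. (\<Prod>j\<in>eff f. iota q j) * (\<Prod>j\<in>eff k. iota q j)) = 0"
proof -
  have ne: "eff f \<noteq> eff k" using eff f k fk unfolding bij_betw_def inj_on_def by auto
  have "(\<Sum>q<2^K. (\<Prod>j\<in>eff f. iota q j) * (\<Prod>j\<in>eff k. iota q j))
      = (\<Sum>q<2^K. \<Prod>j\<in>(eff f - eff k) \<union> (eff k - eff f). iota q j)"
    by (rule sum.cong[OF refl]) (use prod_symdiff eff_sub f k in auto)
  also have "\<dots> = 0"
    by (rule walsh0) (use eff_sub[OF f] eff_sub[OF k] ne in auto)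
  finally show ?thesis .
qed

lemma g_col_orth:
  assumes q: "q < 2^K" and q': "q' < 2^K"
  shows "1 + (\<Sum>f<2^K-1. (\<Prod>j\<in>eff f. iota q j) * (\<Prod>j\<in>eff f. iota q' j))
       = (if q = q' then 2^K else 0)"
proof -
  let ?a = "\<lambda>j. iota q j * iota q' j"
  have "(\<Sum>f<2^K-1. (\<Prod>j\<in>eff f. iota q j) * (\<Prod>j\<in>eff f. iota q' j))
      = (\<Sum>f<2^K-1. \<Prod>j\<in>eff f. ?a j)"
    by (simp add: prod.distrib)
  also have "\<dots> = (\<Sum>S\<in>{S. S \<subseteq> {..<K} \<and> S \<noteq> {}}. \<Prod>j\<in>S. ?a j)"
    by (rule sum.reindex_bij_betw[OF eff])
  finally have E: "(\<Sum>f<2^K-1. (\<Prod>j\<in>eff f. iota q j) * (\<Prod>j\<in>eff f. iota q' j))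
      = (\<Sum>S\<in>{S. S \<subseteq> {..<K} \<and> S \<noteq> {}}. \<Prod>j\<in>S. ?a j)" .
  have P: "Pow {..<K} = insert {} {S. S \<subseteq> {..<K} \<and> S \<noteq> {}}" by auto
  have "(\<Prod>j<K. ?a j + 1) = (\<Sum>X\<in>Pow {..<K}. (\<Prod>j\<in>X. ?a j) * (\<Prod>j\<in>{..<K} - X. 1))"
    by (rule prod_add) simp
  also have "\<dots> = (\<Sum>X\<in>Pow {..<K}. (\<Prod>j\<in>X. ?a j))" by simp
  also have "\<dots> = 1 + (\<Sum>S\<in>{S. S \<subseteq> {..<K} \<and> S \<noteq> {}}. \<Prod>j\<in>S. ?a j)"
    unfolding P by (subst sum.insert) auto
  finally have E2: "1 + (\<Sum>f<2^K-1. (\<Prod>j\<in>eff f. iota q j) * (\<Prod>j\<in>eff f. iota q' j)) = (\<Prod>j<K. ?a j + 1)"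
    using E by simp
  show ?thesis
  proof (cases "q = q'")
    case True
    then have "(\<Prod>j<K. ?a j + 1) = (\<Prod>j<K. 2::real)"
      using iota_sq[OF q] by (intro prod.cong) auto
    then show ?thesis using E2 True by simp
  next
    case False
    have "\<exists>j<K. iota q j \<noteq> iota q' j"
    proof (rule ccontr)
      assume "\<not> ?thesis"
      then have "restrict (iota q) {..<K} = restrict (iota q') {..<K}" by (auto simp: restrict_def)
      then have "q = q'" using iota q q' unfolding bij_betw_def inj_on_def by auto
      then show False using False by simp
    qed
    then obtain j where j: "j < K" "iota q j \<noteq> iota q' j" by blast
    have "?a j + 1 = 0" using iota_val[OF q j(1)] iota_val[OF q' j(1)] j(2) by auto
    then have "(\<Prod>j<K. ?a j + 1) = 0" using j(1) by (intro prod_zero) auto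
    then show ?thesis using E2 False by simp
  qed
qed

lemma additive_const:
  assumes D: "\<forall>f<2^K-1. (\<Sum>q<2^K. (\<Prod>j\<in>eff f. iota q j) * D q) = 0"
    and q: "q < 2^K"
  shows "D q = D 0"
proof -
  have key: "real (2^K) * D q' = (\<Sum>q<2^K. D q)" if q': "q' < 2^K" for q'
  proof -
    have "real (2^K) * D q' = (\<Sum>q<2^K. D q * (if q = q' then 2^K else 0))"
      using q' by (simp add: if_distrib sum.delta' cong: if_cong)
    also have "\<dots> = (\<Sum>q<2^K. D q * (1 + (\<Sum>f<2^K-1. (\<Prod>j\<in>eff f. iota q j) * (\<Prod>j\<in>eff f. iota q' j))))"
      by (rule sum.cong[OF refl]) (use g_col_orth q' in simp)
    also have "\<dots> = (\<Sum>q<2^K. D q) + (\<Sum>f<2^K-1. (\<Prod>j\<in>eff f. iota q' j) * (\<Sum>q<2^K. (\<Prod>j\<in>eff f. iota q j) * D q))"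
    proof -
      let ?X = "\<lambda>f q. (\<Prod>j\<in>eff f. iota q j)"
      have "(\<Sum>q<2^K. D q * (1 + (\<Sum>f<2^K-1. ?X f q * ?X f q')))
          = (\<Sum>q<2^K. D q + (\<Sum>f<2^K-1. ?X f q' * (?X f q * D q)))"
        by (rule sum.cong[OF refl]) (simp add: distrib_left sum_distrib_left mult_ac)
      also have "\<dots> = (\<Sum>q<2^K. D q) + (\<Sum>q<2^K. \<Sum>f<2^K-1. ?X f q' * (?X f q * D q))"
        by (rule sum.distrib)
      also have "(\<Sum>q<2^K. \<Sum>f<2^K-1. ?X f q' * (?X f q * D q)) = (\<Sum>f<2^K-1. \<Sum>q<2^K. ?X f q' * (?X f q * D q))"
        by (rule sum.swap)
      also have "\<dots> = (\<Sum>f<2^K-1. ?X f q' * (\<Sum>q<2^K. ?X f q * D q))"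
        by (simp only: sum_distrib_left)
      finally show ?thesis .
    qed
    also have "\<dots> = (\<Sum>q<2^K. D q)" using D by simp
    finally show ?thesis .
  qed
  have "real (2^K) * D q = real (2^K) * D 0" using key[OF q] key[of 0] by simp
  then show ?thesis by simp
qed

end

lemma sum_FL:
  fixes h :: "nat \<Rightarrow> 'a::comm_monoid_add" and F L :: nat
  shows "(\<Sum>j<F*L. h j) = (\<Sum>k<F. \<Sum>m<L. h (k*L+m))"
proof -
  have "(\<Sum>j<F*L. h j) = (\<Sum>k<F. \<Sum>j\<in>{k*L..<k*L+L}. h j)"
    using sum.nat_group[of h L F] by simp
  also have "\<dots> = (\<Sum>k<F. \<Sum>m<L. h (k*L+m))"
  proof (rule sum.cong[OF refl])
    fix k
    have "(\<Sum>j\<in>{0+k*L..<L+k*L}. h j) = (\<Sum>m\<in>{0..<L}. h (m + k*L))"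
      by (rule sum.shift_bounds_nat_ivl)
    then show "(\<Sum>j\<in>{k*L..<k*L+L}. h j) = (\<Sum>m<L. h (k*L+m))"
      by (simp add: atLeast0LessThan add.commute)
  qed
  finally show ?thesis .
qed

lemma mv_index: "M \<in> carrier_mat d d' \<Longrightarrow> v \<in> carrier_vec d' \<Longrightarrow> i < d \<Longrightarrow>
  (M *\<^sub>v v) $ i = (\<Sum>j<d'. M $$ (i,j) * v $ j)"
  by (simp add: scalar_prod_def atLeast0LessThan)

lemma sp_index: "v \<in> carrier_vec d \<Longrightarrow> w \<in> carrier_vec d \<Longrightarrow> v \<bullet> w = (\<Sum>i<d. v $ i * w $ i)"
  by (simp add: scalar_prod_def atLeast0LessThan)

lemma ker_solve:
  fixes M :: "real mat"
  assumes M: "M \<in> carrier_mat d d"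
    and ker: "\<And>v. v \<in> carrier_vec d \<Longrightarrow> M *\<^sub>v v = 0\<^sub>v d \<Longrightarrow> v = 0\<^sub>v d"
  shows "the (mat_inverse M) \<in> carrier_mat d d \<and> (\<forall>r\<in>carrier_vec d. M *\<^sub>v (the (mat_inverse M) *\<^sub>v r) = r)"
proof -
  have "det M \<noteq> 0" using det_0_iff_vec_prod_zero_field[OF M] ker by blast
  then have U: "M \<in> Units (ring_mat TYPE(real) d ())" by (rule det_non_zero_imp_unit[OF M])
  have "mat_inverse M \<noteq> None"
  proof
    assume "mat_inverse M = None"
    then have "M \<notin> Units (ring_mat TYPE(real) d ())" by (rule mat_inverse(1)[OF M])
    with U show False by simp
  qed
  then obtain B where B: "mat_inverse M = Some B" by auto
  have MB: "M * B = 1\<^sub>m d" and Bc: "B \<in> carrier_mat d d" using mat_inverse(2)[OF M B] by auto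
  have "M *\<^sub>v (B *\<^sub>v r) = r" if r: "r \<in> carrier_vec d" for r
  proof -
    have "M *\<^sub>v (B *\<^sub>v r) = (M * B) *\<^sub>v r" using M Bc r by simp
    also have "\<dots> = r" using MB r by simp
    finally show ?thesis .
  qed
  then show ?thesis using B Bc by simp
qed

lemma ker_unique:
  fixes M :: "real mat"
  assumes M: "M \<in> carrier_mat d d"
    and ker: "\<And>v. v \<in> carrier_vec d \<Longrightarrow> M *\<^sub>v v = 0\<^sub>v d \<Longrightarrow> v = 0\<^sub>v d"
    and v: "v \<in> carrier_vec d" and w: "w \<in> carrier_vec d" and eq: "M *\<^sub>v v = M *\<^sub>v w"
  shows "v = w"
proof -
  have "M *\<^sub>v (v - w) = 0\<^sub>v d"
  proof (rule eq_vecI)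
    fix i assume "i < dim_vec (0\<^sub>v d :: real vec)"
    then have i: "i < d" by simp
    have vw: "v - w \<in> carrier_vec d" using v w by simp
    have "(M *\<^sub>v (v - w)) $ i = (\<Sum>j<d. M $$ (i,j) * (v - w) $ j)" by (rule mv_index[OF M vw i])
    also have "\<dots> = (\<Sum>j<d. M $$ (i,j) * v $ j) - (\<Sum>j<d. M $$ (i,j) * w $ j)"
      using v w by (simp add: right_diff_distrib sum_subtractf)
    also have "\<dots> = (M *\<^sub>v v) $ i - (M *\<^sub>v w) $ i" by (simp only: mv_index[OF M v i] mv_index[OF M w i])
    finally show "(M *\<^sub>v (v - w)) $ i = 0\<^sub>v d $ i" using eq i by simp
  qed (use M in simp)
  then have "v - w = 0\<^sub>v d" using ker v w by simp
  then show ?thesis using v w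
    by (metis M carrier_vecD eq_vecI index_minus_vec(1) index_zero_vec(1) right_minus_eq)
qed

lemma inv_ker:
  fixes M :: "real mat"
  assumes M: "M \<in> carrier_mat d d" and inv: "invertible_mat M"
    and v: "v \<in> carrier_vec d" and z: "M *\<^sub>v v = 0\<^sub>v d"
  shows "v = 0\<^sub>v d"
proof -
  obtain B where i1: "inverts_mat M B" and i2: "inverts_mat B M"
    using inv unfolding invertible_mat_def by blast
  have MB: "M * B = 1\<^sub>m d" using i1 M unfolding inverts_mat_def by simp
  have BM: "B * M = 1\<^sub>m (dim_row B)" using i2 unfolding inverts_mat_def by simp
  have "dim_col B = d" using MB by (metis index_mult_mat(3) index_one_mat(3))
  have "dim_row B = d" using BM M by (metis carrier_matD(2) index_mult_mat(3) index_one_mat(3))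
  then have Bc: "B \<in> carrier_mat d d" using \<open>dim_col B = d\<close> by auto
  have "v = (B * M) *\<^sub>v v" using BM \<open>dim_row B = d\<close> v by simp
  also have "\<dots> = B *\<^sub>v (M *\<^sub>v v)" using Bc M v by simp
  also have "\<dots> = 0\<^sub>v d" using z Bc by (auto intro!: eq_vecI simp: scalar_prod_def)
  finally show ?thesis .
qed

lemma smult_mv:
  fixes M :: "real mat"
  assumes "M \<in> carrier_mat d d'" "v \<in> carrier_vec d'"
  shows "(a \<cdot>\<^sub>m M) *\<^sub>v v = a \<cdot>\<^sub>v (M *\<^sub>v v)"
  using assms by (intro eq_vecI) (auto simp: mv_index sum_distrib_left mult.assoc)

lemma rcov_sym: "rcov A u v = rcov A v u"
  unfolding rcov_def by (simp add: mult.commute)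

lemma rcov_lin_left:
  "rcov A (\<lambda>Z. a Z - (\<Sum>j<d. c j * b j Z)) V = rcov A a V - (\<Sum>j<d. c j * rcov A (b j) V)"
proof -
  have e1: "rexp A (\<lambda>Z. (a Z - (\<Sum>j<d. c j * b j Z)) * V Z)
      = rexp A (\<lambda>Z. a Z * V Z) - (\<Sum>j<d. c j * rexp A (\<lambda>Z. b j Z * V Z))"
  proof -
    have "rexp A (\<lambda>Z. (a Z - (\<Sum>j<d. c j * b j Z)) * V Z)
        = rexp A (\<lambda>Z. a Z * V Z - (\<Sum>j<d. c j * (b j Z * V Z)))"
      by (simp add: left_diff_distrib sum_distrib_right mult.assoc)
    also have "\<dots> = rexp A (\<lambda>Z. a Z * V Z) - rexp A (\<lambda>Z. \<Sum>j<d. c j * (b j Z * V Z))"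
      by (rule rexp_diff)
    also have "rexp A (\<lambda>Z. \<Sum>j<d. c j * (b j Z * V Z)) = (\<Sum>j<d. c j * rexp A (\<lambda>Z. b j Z * V Z))"
      by (simp add: rexp_sum rexp_scale)
    finally show ?thesis .
  qed
  have e2: "rexp A (\<lambda>Z. a Z - (\<Sum>j<d. c j * b j Z)) = rexp A a - (\<Sum>j<d. c j * rexp A (b j))"
    by (simp add: rexp_diff rexp_sum rexp_scale)
  have e3: "(rexp A a - (\<Sum>j<d. c j * rexp A (b j))) * rexp A V
      = rexp A a * rexp A V - (\<Sum>j<d. c j * (rexp A (b j) * rexp A V))"
    by (simp add: left_diff_distrib sum_distrib_right mult.assoc)
  have e4: "(\<Sum>j<d. c j * rcov A (b j) V)
      = (\<Sum>j<d. c j * rexp A (\<lambda>Z. b j Z * V Z)) - (\<Sum>j<d. c j * (rexp A (b j) * rexp A V))"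
    unfolding rcov_def by (simp add: right_diff_distrib sum_subtractf)
  show ?thesis unfolding e4 unfolding rcov_def e1 e2 e3 by simp
qed


context
  fixes A :: "(nat \<Rightarrow> nat) set" and th :: "nat \<Rightarrow> (nat \<Rightarrow> nat) \<Rightarrow> real"
    and thx :: "nat \<Rightarrow> nat \<Rightarrow> (nat \<Rightarrow> nat) \<Rightarrow> real"
    and kap :: "nat \<Rightarrow> nat \<Rightarrow> real" and k0 S11 :: real and Sxx :: "real mat" and S1x :: "real vec"
    and F L :: nat
  assumes F: "F \<ge> 1" and L: "L \<ge> 1"
    and Sxx: "Sxx \<in> carrier_mat L L" and Ssym: "\<And>l m. l < L \<Longrightarrow> m < L \<Longrightarrow> Sxx $$ (l,m) = Sxx $$ (m,l)"
    and Sinv: "invertible_mat Sxx"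
    and Spsd: "\<And>w. w \<in> carrier_vec L \<Longrightarrow> 0 \<le> (Sxx *\<^sub>v w) \<bullet> w"
    and S1x: "S1x \<in> carrier_vec L" and S11: "S11 > 0"
    and k0: "k0 > 0" and kff: "\<And>f. f < F \<Longrightarrow> kap f f = k0"
    and ksym: "\<And>f k. kap f k = kap k f"
    and kker: "\<And>y. (\<forall>k<F. (\<Sum>k'<F. kap k k' * y k') = 0) \<Longrightarrow> \<forall>k<F. y k = 0"
    and cov1: "\<And>f k l. f < F \<Longrightarrow> k < F \<Longrightarrow> l < L \<Longrightarrow> rcov A (th f) (thx k l) = kap f k * S1x $ l"
    and cov2: "\<And>k k' l m. k < F \<Longrightarrow> k' < F \<Longrightarrow> l < L \<Longrightarrow> m < L \<Longrightarrow>
                 rcov A (thx k l) (thx k' m) = kap k k' * Sxx $$ (l,m)"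
    and var1: "\<And>f. f < F \<Longrightarrow> rvar A (th f) = k0 * S11"
begin

lemma Sxx_ker: "v \<in> carrier_vec L \<Longrightarrow> Sxx *\<^sub>v v = 0\<^sub>v L \<Longrightarrow> v = 0\<^sub>v L"
  using inv_ker[OF Sxx Sinv] by blast

lemma Binv: "the (mat_inverse Sxx) \<in> carrier_mat L L"
  using ker_solve[OF Sxx Sxx_ker] by blast

lemma beta_c: "the (mat_inverse Sxx) *\<^sub>v S1x \<in> carrier_vec L"
  using Binv S1x by simp

lemma beta_eq: "Sxx *\<^sub>v (the (mat_inverse Sxx) *\<^sub>v S1x) = S1x"
  using ker_solve[OF Sxx Sxx_ker] S1x by blast

lemma beta_idx: "l < L \<Longrightarrow> (\<Sum>j<L. Sxx $$ (l,j) * (the (mat_inverse Sxx) *\<^sub>v S1x) $ j) = S1x $ l"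
  using mv_index[OF Sxx beta_c] beta_eq by metis

lemma P_nonneg: "0 \<le> S1x \<bullet> (the (mat_inverse Sxx) *\<^sub>v S1x)"
  using Spsd[OF beta_c] beta_eq by simp

lemma rmat_k: "k < F \<Longrightarrow> rcov_mat A (thx k) L = k0 \<cdot>\<^sub>m Sxx"
  by (rule eq_matI) (use Sxx in \<open>auto simp: rcov_mat_def cov2 kff\<close>)

lemma rvec_fk: "f < F \<Longrightarrow> k < F \<Longrightarrow> rcov_vec A (th f) (thx k) L = kap f k \<cdot>\<^sub>v S1x"
  by (rule eq_vecI) (use S1x in \<open>auto simp: rcov_vec_def cov1\<close>)

lemma Mk_c: "k0 \<cdot>\<^sub>m Sxx \<in> carrier_mat L L" using Sxx by simp

lemma Mk_ker: "v \<in> carrier_vec L \<Longrightarrow> (k0 \<cdot>\<^sub>m Sxx) *\<^sub>v v = 0\<^sub>v L \<Longrightarrow> v = 0\<^sub>v L"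
proof -
  assume v: "v \<in> carrier_vec L" and z: "(k0 \<cdot>\<^sub>m Sxx) *\<^sub>v v = 0\<^sub>v L"
  have "k0 \<cdot>\<^sub>v (Sxx *\<^sub>v v) = 0\<^sub>v L" using z smult_mv[OF Sxx v] by simp
  then have "Sxx *\<^sub>v v = 0\<^sub>v L"
  proof (intro eq_vecI)
    fix i assume h: "k0 \<cdot>\<^sub>v (Sxx *\<^sub>v v) = 0\<^sub>v L" and i: "i < dim_vec (0\<^sub>v L :: real vec)"
    have "(k0 \<cdot>\<^sub>v (Sxx *\<^sub>v v)) $ i = 0" using h i by simp
    then show "(Sxx *\<^sub>v v) $ i = 0\<^sub>v L $ i" using i k0 Sxx by simp
  qed (use Sxx in simp)
  then show "v = 0\<^sub>v L" using Sxx_ker v by blast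
qed

lemma coef_k:
  assumes "f < F" "k < F"
  shows "the (mat_inverse (k0 \<cdot>\<^sub>m Sxx)) *\<^sub>v (kap f k \<cdot>\<^sub>v S1x) = (kap f k / k0) \<cdot>\<^sub>v (the (mat_inverse Sxx) *\<^sub>v S1x)"
proof (rule ker_unique[OF Mk_c Mk_ker])
  have ks: "the (mat_inverse (k0 \<cdot>\<^sub>m Sxx)) \<in> carrier_mat L L \<and>
     (\<forall>r\<in>carrier_vec L. (k0 \<cdot>\<^sub>m Sxx) *\<^sub>v (the (mat_inverse (k0 \<cdot>\<^sub>m Sxx)) *\<^sub>v r) = r)"
    by (rule ker_solve[OF Mk_c Mk_ker])
  have Bk: "the (mat_inverse (k0 \<cdot>\<^sub>m Sxx)) \<in> carrier_mat L L" using ks by blast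
  have ks2: "\<And>r. r \<in> carrier_vec L \<Longrightarrow> (k0 \<cdot>\<^sub>m Sxx) *\<^sub>v (the (mat_inverse (k0 \<cdot>\<^sub>m Sxx)) *\<^sub>v r) = r"
    using ks by blast
  show "the (mat_inverse (k0 \<cdot>\<^sub>m Sxx)) *\<^sub>v (kap f k \<cdot>\<^sub>v S1x) \<in> carrier_vec L"
    using mult_mat_vec_carrier[OF Bk] S1x by simp
  show "(kap f k / k0) \<cdot>\<^sub>v (the (mat_inverse Sxx) *\<^sub>v S1x) \<in> carrier_vec L"
    using beta_c by simp
  have "(k0 \<cdot>\<^sub>m Sxx) *\<^sub>v ((kap f k / k0) \<cdot>\<^sub>v (the (mat_inverse Sxx) *\<^sub>v S1x))
      = k0 \<cdot>\<^sub>v (Sxx *\<^sub>v ((kap f k / k0) \<cdot>\<^sub>v (the (mat_inverse Sxx) *\<^sub>v S1x)))"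
    using smult_mv[OF Sxx] beta_c by simp
  also have "\<dots> = k0 \<cdot>\<^sub>v ((kap f k / k0) \<cdot>\<^sub>v S1x)"
    using mult_mat_vec[OF Sxx beta_c] beta_eq by simp
  also have "\<dots> = kap f k \<cdot>\<^sub>v S1x" using k0 by (simp add: smult_smult_assoc)
  finally have e: "(k0 \<cdot>\<^sub>m Sxx) *\<^sub>v ((kap f k / k0) \<cdot>\<^sub>v (the (mat_inverse Sxx) *\<^sub>v S1x)) = kap f k \<cdot>\<^sub>v S1x" .
  show "(k0 \<cdot>\<^sub>m Sxx) *\<^sub>v (the (mat_inverse (k0 \<cdot>\<^sub>m Sxx)) *\<^sub>v (kap f k \<cdot>\<^sub>v S1x)) =
        (k0 \<cdot>\<^sub>m Sxx) *\<^sub>v ((kap f k / k0) \<cdot>\<^sub>v (the (mat_inverse Sxx) *\<^sub>v S1x))"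
    unfolding e using ks2 S1x by simp
qed

lemma gam2_formula:
  assumes f: "f < F" and k: "k < F"
  shows "sq_mult_corr A (th f) (thx k) L
       = (kap f k)^2 / k0^2 * ((S1x \<bullet> (the (mat_inverse Sxx) *\<^sub>v S1x)) / S11)"
proof -
  have "sq_mult_corr A (th f) (thx k) L
      = ((kap f k \<cdot>\<^sub>v S1x) \<bullet> ((kap f k / k0) \<cdot>\<^sub>v (the (mat_inverse Sxx) *\<^sub>v S1x))) / (k0 * S11)"
    unfolding sq_mult_corr_def rmat_k[OF k] rvec_fk[OF f k] coef_k[OF f k] var1[OF f] ..
  also have "\<dots> = kap f k * (kap f k / k0) * (S1x \<bullet> (the (mat_inverse Sxx) *\<^sub>v S1x)) / (k0 * S11)"
    using S1x beta_c by simp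
  also have "\<dots> = (kap f k)^2 / k0^2 * ((S1x \<bullet> (the (mat_inverse Sxx) *\<^sub>v S1x)) / S11)"
    using k0 S11 by (simp add: power2_eq_square)
  finally show ?thesis .
qed


lemma divmod_lt: "j < F * L \<Longrightarrow> j div L < F \<and> j mod L < L"
  using L by (simp add: less_mult_imp_div_less mult.commute)

lemma kl_div: "m < L \<Longrightarrow> (k * L + m) div L = k" using L by simp
lemma kl_mod: "m < L \<Longrightarrow> (k * L + m) mod L = m" using L by simp
lemma kl_lt: "k < F \<Longrightarrow> m < L \<Longrightarrow> k * L + m < F * L"
proof -
  assume k: "k < F" and m: "m < L"
  have "k * L + m < k * L + L" using m by simp
  also have "\<dots> = Suc k * L" by simp
  also have "\<dots> \<le> F * L" using k by (intro mult_le_mono1) simp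
  finally show ?thesis .
qed

abbreviation "WW \<equiv> (\<lambda>j. thx (j div L) (j mod L))"

lemma MR_c: "rcov_mat A WW (F*L) \<in> carrier_mat (F*L) (F*L)"
  by (simp add: rcov_mat_def)

lemma MR_idx: "i < F*L \<Longrightarrow> j < F*L \<Longrightarrow>
   rcov_mat A WW (F*L) $$ (i,j) = kap (i div L) (j div L) * Sxx $$ (i mod L, j mod L)"
  using divmod_lt[of i] divmod_lt[of j] by (simp add: rcov_mat_def cov2)

lemma vR_c: "rcov_vec A (th f) WW (F*L) \<in> carrier_vec (F*L)"
  by (simp add: rcov_vec_def)

lemma vR_idx: "f < F \<Longrightarrow> j < F*L \<Longrightarrow>
   rcov_vec A (th f) WW (F*L) $ j = kap f (j div L) * S1x $ (j mod L)"
  using divmod_lt[of j] by (simp add: rcov_vec_def cov1)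

lemma MR_ker:
  assumes v: "v \<in> carrier_vec (F*L)" and z: "rcov_mat A WW (F*L) *\<^sub>v v = 0\<^sub>v (F*L)"
  shows "v = 0\<^sub>v (F*L)"
proof -
  define U where "U = (\<lambda>k' l. \<Sum>m<L. Sxx $$ (l,m) * v $ (k'*L+m))"
  have eqs: "(\<Sum>k'<F. kap k k' * U k' l) = 0" if k: "k < F" and l: "l < L" for k l
  proof -
    have i: "k*L+l < F*L" by (rule kl_lt[OF k l])
    have "0 = (rcov_mat A WW (F*L) *\<^sub>v v) $ (k*L+l)" using z i by simp
    also have "\<dots> = (\<Sum>j<F*L. rcov_mat A WW (F*L) $$ (k*L+l, j) * v $ j)"
      by (rule mv_index[OF MR_c v i])
    also have "\<dots> = (\<Sum>k'<F. \<Sum>m<L. rcov_mat A WW (F*L) $$ (k*L+l, k'*L+m) * v $ (k'*L+m))"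
      by (rule sum_FL)
    also have "\<dots> = (\<Sum>k'<F. \<Sum>m<L. kap k k' * (Sxx $$ (l,m) * v $ (k'*L+m)))"
      by (rule sum.cong[OF refl], rule sum.cong[OF refl])
         (simp add: MR_idx[OF i kl_lt] kl_div kl_mod l)
    also have "\<dots> = (\<Sum>k'<F. kap k k' * U k' l)"
      unfolding U_def by (simp add: sum_distrib_left)
    finally show ?thesis by simp
  qed
  have U0: "U k' l = 0" if k': "k' < F" and l: "l < L" for k' l
    using kker[of "\<lambda>k'. U k' l"] eqs l k' by blast
  have vz: "v $ (k'*L+m) = 0" if k': "k' < F" and m: "m < L" for k' m
  proof -
    define vk where "vk = vec L (\<lambda>m. v $ (k'*L+m))"
    have vkc: "vk \<in> carrier_vec L" unfolding vk_def by simp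
    have "Sxx *\<^sub>v vk = 0\<^sub>v L"
    proof (rule eq_vecI)
      fix l assume "l < dim_vec (0\<^sub>v L :: real vec)"
      then have l: "l < L" by simp
      have "(Sxx *\<^sub>v vk) $ l = (\<Sum>j<L. Sxx $$ (l,j) * vk $ j)" by (rule mv_index[OF Sxx vkc l])
      also have "\<dots> = U k' l" unfolding U_def vk_def by (auto intro!: sum.cong)
      finally have "(Sxx *\<^sub>v vk) $ l = U k' l" .
      then show "(Sxx *\<^sub>v vk) $ l = 0\<^sub>v L $ l" using U0[OF k' l] l by simp
    qed (use Sxx in simp)
    then have "vk = 0\<^sub>v L" using Sxx_ker vkc by blast
    then have "vk $ m = 0" using m by simp
    then show ?thesis unfolding vk_def using m by simp
  qed
  show ?thesis
  proof (rule eq_vecI)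
    fix j assume "j < dim_vec (0\<^sub>v (F*L) :: real vec)"
    then have j: "j < F*L" by simp
    have "j = (j div L) * L + j mod L" by simp
    then have "v $ j = 0" using vz[of "j div L" "j mod L"] divmod_lt[OF j] by metis
    then show "v $ j = 0\<^sub>v (F*L) $ j" using j by simp
  qed (use v in simp)
qed

definition wR :: "nat \<Rightarrow> real vec" where
  "wR f = vec (F*L) (\<lambda>j. if j div L = f then (the (mat_inverse Sxx) *\<^sub>v S1x) $ (j mod L) else 0)"

lemma wR_c: "wR f \<in> carrier_vec (F*L)" by (simp add: wR_def)

lemma sum_FL_delta:
  assumes f: "f < F"
  shows "(\<Sum>j<F*L. h j * wR f $ j) = (\<Sum>m<L. h (f*L+m) * (the (mat_inverse Sxx) *\<^sub>v S1x) $ m)"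
proof -
  have "(\<Sum>j<F*L. h j * wR f $ j) = (\<Sum>k'<F. \<Sum>m<L. h (k'*L+m) * wR f $ (k'*L+m))"
    by (rule sum_FL)
  also have "\<dots> = (\<Sum>k'<F. if k' = f then (\<Sum>m<L. h (f*L+m) * (the (mat_inverse Sxx) *\<^sub>v S1x) $ m) else 0)"
  proof (rule sum.cong[OF refl])
    fix k' assume k': "k' \<in> {..<F}"
    show "(\<Sum>m<L. h (k'*L+m) * wR f $ (k'*L+m))
       = (if k' = f then (\<Sum>m<L. h (f*L+m) * (the (mat_inverse Sxx) *\<^sub>v S1x) $ m) else 0)"
      using k' by (auto simp: wR_def kl_lt kl_div kl_mod intro!: sum.cong)
  qed
  also have "\<dots> = (\<Sum>m<L. h (f*L+m) * (the (mat_inverse Sxx) *\<^sub>v S1x) $ m)"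
    using f by simp
  finally show ?thesis .
qed

lemma MR_wR:
  assumes f: "f < F"
  shows "rcov_mat A WW (F*L) *\<^sub>v wR f = rcov_vec A (th f) WW (F*L)"
proof (rule eq_vecI)
  fix i assume "i < dim_vec (rcov_vec A (th f) WW (F*L))"
  then have i: "i < F*L" by (simp add: rcov_vec_def)
  have il: "i mod L < L" "i div L < F" using divmod_lt[OF i] by auto
  have "(rcov_mat A WW (F*L) *\<^sub>v wR f) $ i = (\<Sum>j<F*L. rcov_mat A WW (F*L) $$ (i,j) * wR f $ j)"
    by (rule mv_index[OF MR_c wR_c i])
  also have "\<dots> = (\<Sum>m<L. rcov_mat A WW (F*L) $$ (i, f*L+m) * (the (mat_inverse Sxx) *\<^sub>v S1x) $ m)"
    by (rule sum_FL_delta[OF f])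
  also have "\<dots> = (\<Sum>m<L. kap (i div L) f * (Sxx $$ (i mod L, m) * (the (mat_inverse Sxx) *\<^sub>v S1x) $ m))"
    by (rule sum.cong[OF refl]) (simp add: MR_idx[OF i kl_lt[OF f]] kl_div kl_mod)
  also have "\<dots> = kap (i div L) f * S1x $ (i mod L)"
    by (simp add: sum_distrib_left[symmetric] beta_idx[OF il(1)])
  also have "\<dots> = rcov_vec A (th f) WW (F*L) $ i"
    using vR_idx[OF f i] ksym by simp
  finally show "(rcov_mat A WW (F*L) *\<^sub>v wR f) $ i = rcov_vec A (th f) WW (F*L) $ i" .
qed (simp add: rcov_vec_def rcov_mat_def)

lemma R2_formula:
  assumes f: "f < F"
  shows "sq_mult_corr A (th f) WW (F*L) = (S1x \<bullet> (the (mat_inverse Sxx) *\<^sub>v S1x)) / S11"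
proof -
  have ks: "the (mat_inverse (rcov_mat A WW (F*L))) \<in> carrier_mat (F*L) (F*L) \<and>
     (\<forall>r\<in>carrier_vec (F*L). rcov_mat A WW (F*L) *\<^sub>v (the (mat_inverse (rcov_mat A WW (F*L))) *\<^sub>v r) = r)"
    by (rule ker_solve[OF MR_c MR_ker])
  have Bc: "the (mat_inverse (rcov_mat A WW (F*L))) \<in> carrier_mat (F*L) (F*L)" using ks by blast
  have sol: "rcov_mat A WW (F*L) *\<^sub>v (the (mat_inverse (rcov_mat A WW (F*L))) *\<^sub>v rcov_vec A (th f) WW (F*L))
      = rcov_vec A (th f) WW (F*L)" using ks vR_c by blast
  have co: "the (mat_inverse (rcov_mat A WW (F*L))) *\<^sub>v rcov_vec A (th f) WW (F*L) = wR f"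
  proof (rule ker_unique[OF MR_c MR_ker])
    show "the (mat_inverse (rcov_mat A WW (F*L))) *\<^sub>v rcov_vec A (th f) WW (F*L) \<in> carrier_vec (F*L)"
      using mult_mat_vec_carrier[OF Bc vR_c] .
    show "wR f \<in> carrier_vec (F*L)" by (rule wR_c)
    show "rcov_mat A WW (F*L) *\<^sub>v (the (mat_inverse (rcov_mat A WW (F*L))) *\<^sub>v rcov_vec A (th f) WW (F*L))
        = rcov_mat A WW (F*L) *\<^sub>v wR f" unfolding sol MR_wR[OF f] ..
  qed
  have "rcov_vec A (th f) WW (F*L) \<bullet> wR f = (\<Sum>j<F*L. rcov_vec A (th f) WW (F*L) $ j * wR f $ j)"
    by (rule sp_index[OF vR_c wR_c])
  also have "\<dots> = (\<Sum>m<L. rcov_vec A (th f) WW (F*L) $ (f*L+m) * (the (mat_inverse Sxx) *\<^sub>v S1x) $ m)"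
    by (rule sum_FL_delta[OF f])
  also have "\<dots> = (\<Sum>m<L. k0 * (S1x $ m * (the (mat_inverse Sxx) *\<^sub>v S1x) $ m))"
    by (rule sum.cong[OF refl]) (simp add: vR_idx[OF f kl_lt[OF f]] kl_div kl_mod kff[OF f])
  also have "\<dots> = k0 * (S1x \<bullet> (the (mat_inverse Sxx) *\<^sub>v S1x))"
    by (simp add: sp_index[OF S1x beta_c] sum_distrib_left)
  finally have num: "rcov_vec A (th f) WW (F*L) \<bullet> wR f = k0 * (S1x \<bullet> (the (mat_inverse Sxx) *\<^sub>v S1x))" .
  show ?thesis
    unfolding sq_mult_corr_def co num var1[OF f] using k0 by simp
qed


lemma coef_f: "f < F \<Longrightarrow> proj_coef A (th f) (thx f) L = the (mat_inverse Sxx) *\<^sub>v S1x"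
  unfolding proj_coef_def using rmat_k[of f] rvec_fk[of f f] coef_k[of f f] kff[of f] k0 by simp

lemma resid_f: "f < F \<Longrightarrow> proj_resid A (th f) (thx f) L
   = (\<lambda>Z. th f Z - (\<Sum>j<L. (the (mat_inverse Sxx) *\<^sub>v S1x) $ j * thx f j Z))"
  unfolding proj_resid_def coef_f ..

lemma cov_resu:
  assumes f: "f < F" and k: "k < F" and l: "l < L"
  shows "rcov A (proj_resid A (th f) (thx f) L) (thx k l) = 0"
proof -
  let ?b = "the (mat_inverse Sxx) *\<^sub>v S1x"
  have "rcov A (proj_resid A (th f) (thx f) L) (thx k l)
      = rcov A (th f) (thx k l) - (\<Sum>j<L. ?b $ j * rcov A (thx f j) (thx k l))"
    unfolding resid_f[OF f] by (rule rcov_lin_left)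
  also have "\<dots> = kap f k * S1x $ l - (\<Sum>j<L. ?b $ j * (kap f k * Sxx $$ (l,j)))"
  proof -
    have "(\<Sum>j<L. ?b $ j * rcov A (thx f j) (thx k l)) = (\<Sum>j<L. ?b $ j * (kap f k * Sxx $$ (l,j)))"
    proof (rule sum.cong[OF refl])
      fix j assume "j \<in> {..<L}"
      then have j: "j < L" by simp
      show "?b $ j * rcov A (thx f j) (thx k l) = ?b $ j * (kap f k * Sxx $$ (l,j))"
        using cov2[OF f k j l] Ssym[OF j l] by simp
    qed
    then show ?thesis using cov1[OF f k l] by simp
  qed
  also have "\<dots> = kap f k * (S1x $ l - (\<Sum>j<L. Sxx $$ (l,j) * ?b $ j))"
    by (simp add: right_diff_distrib sum_distrib_left mult_ac)
  also have "\<dots> = 0" using beta_idx[OF l] by simp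
  finally show ?thesis .
qed

lemma Res_formula:
  assumes f: "f < F" and j: "j < F*L"
  shows "rcov A (proj_resid A (th f) (thx f) L) (proj_resid A (thx (j div L) (j mod L)) (thx f) L) = 0"
proof -
  obtain k l where kl: "k = j div L" "l = j mod L" by blast
  have k: "k < F" and l: "l < L" using divmod_lt[OF j] kl by auto
  let ?ru = "proj_resid A (th f) (thx f) L"
  let ?g = "proj_coef A (thx k l) (thx f) L"
  have rv: "proj_resid A (thx k l) (thx f) L = (\<lambda>Z. thx k l Z - (\<Sum>j<L. ?g $ j * thx f j Z))"
    unfolding proj_resid_def ..
  have "rcov A ?ru (proj_resid A (thx k l) (thx f) L) = rcov A (proj_resid A (thx k l) (thx f) L) ?ru"
    by (rule rcov_sym)
  also have "\<dots> = rcov A (thx k l) ?ru - (\<Sum>j<L. ?g $ j * rcov A (thx f j) ?ru)"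
    unfolding rv by (rule rcov_lin_left)
  also have "\<dots> = 0"
    using cov_resu[OF f k l] cov_resu[OF f f] by (simp add: rcov_sym[of A _ ?ru])
  finally show ?thesis using kl by simp
qed

end

lemma fact_est_repr:
  assumes Z: "Z \<in> crfe_assignments n Q nq"
  shows "fact_est K Q g n V f Z = (\<Sum>i<n. V i (Z i) * ((1 / 2 ^ (K - 1)) * g f (Z i) / real (nq (Z i))))"
proof -
  let ?c = "1 / 2 ^ (K - 1) :: real"
  let ?h = "\<lambda>i. V i (Z i) * (?c * g f (Z i) / real (nq (Z i)))"
  have Zin: "Z ` {..<n} \<subseteq> {..<Q}" using Z unfolding crfe_assignments_def by auto
  have card: "card {i\<in>{..<n}. Z i = q} = nq q" if "q < Q" for q
    using Z that unfolding crfe_assignments_def by auto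
  have "(\<Sum>i<n. ?h i) = (\<Sum>q<Q. \<Sum>i\<in>{i. i \<in> {..<n} \<and> Z i = q}. ?h i)"
    by (rule sum.group[symmetric]) (use Zin in auto)
  also have "\<dots> = (\<Sum>q<Q. ?c * (g f q * group_mean n V Z q))"
  proof (rule sum.cong[OF refl])
    fix q assume q: "q \<in> {..<Q}"
    have "(\<Sum>i\<in>{i. i \<in> {..<n} \<and> Z i = q}. ?h i) = (\<Sum>i\<in>{i. i \<in> {..<n} \<and> Z i = q}. (?c * g f q / real (nq q)) * V i q)"
      by (rule sum.cong) (auto simp: mult.commute)
    also have "\<dots> = (?c * g f q / real (nq q)) * (\<Sum>i\<in>{i \<in> {..<n}. Z i = q}. V i q)"
      by (simp add: sum_distrib_left)
    also have "\<dots> = ?c * (g f q * group_mean n V Z q)"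
      unfolding group_mean_def card[OF q[simplified]] by simp
    finally show "(\<Sum>i\<in>{i. i \<in> {..<n} \<and> Z i = q}. ?h i) = ?c * (g f q * group_mean n V Z q)" .
  qed
  also have "\<dots> = fact_est K Q g n V f Z"
    unfolding fact_est_def by (simp add: sum_distrib_left)
  finally show ?thesis by simp
qed

lemma fcov_sym: "fcov n u v = fcov n v u"
  unfolding fcov_def by (simp add: mult.commute)

lemma fcov_psd:
  assumes n: "n \<ge> 2" and w: "w \<in> carrier_vec L"
  shows "0 \<le> (fcov_xx n x L *\<^sub>v w) \<bullet> w"
proof -
  define e where "e = (\<lambda>i l. x i l - fmean n (\<lambda>i. x i l))"
  have Mc: "fcov_xx n x L \<in> carrier_mat L L" by (simp add: fcov_xx_def)
  have Mv: "fcov_xx n x L *\<^sub>v w \<in> carrier_vec L" using Mc w by simp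
  have fc: "fcov n (\<lambda>i. x i l) (\<lambda>i. x i m) = (\<Sum>i<n. e i l * e i m) / (real n - 1)" for l m
    unfolding fcov_def e_def ..
  have "(fcov_xx n x L *\<^sub>v w) \<bullet> w = (\<Sum>l<L. (fcov_xx n x L *\<^sub>v w) $ l * w $ l)"
    by (rule sp_index[OF Mv w])
  also have "\<dots> = (\<Sum>l<L. (\<Sum>m<L. fcov n (\<lambda>i. x i l) (\<lambda>i. x i m) * w $ m) * w $ l)"
  proof (rule sum.cong[OF refl])
    fix l assume "l \<in> {..<L}"
    then have l: "l < L" by simp
    have "(fcov_xx n x L *\<^sub>v w) $ l = (\<Sum>m<L. fcov_xx n x L $$ (l,m) * w $ m)" by (rule mv_index[OF Mc w l])
    also have "\<dots> = (\<Sum>m<L. fcov n (\<lambda>i. x i l) (\<lambda>i. x i m) * w $ m)"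
      using l by (auto simp: fcov_xx_def intro!: sum.cong)
    finally show "(fcov_xx n x L *\<^sub>v w) $ l * w $ l = (\<Sum>m<L. fcov n (\<lambda>i. x i l) (\<lambda>i. x i m) * w $ m) * w $ l"
      by simp
  qed
  also have "\<dots> = (\<Sum>l<L. \<Sum>m<L. \<Sum>i<n. (e i l * w $ l) * (e i m * w $ m) / (real n - 1))"
    unfolding fc by (simp add: sum_distrib_left sum_distrib_right sum_divide_distrib times_divide_eq_right mult_ac)
  also have "\<dots> = (\<Sum>i<n. (\<Sum>l<L. e i l * w $ l) * (\<Sum>m<L. e i m * w $ m)) / (real n - 1)"
    by (simp add: sum_product sum_divide_distrib sum.swap[of _ "{..<n}"])
  also have "\<dots> \<ge> 0"
    using n by (intro divide_nonneg_nonneg sum_nonneg) auto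
  finally show ?thesis .
qed


theorem proposition5:
  fixes K L n F Q :: nat
    and iota :: "nat \<Rightarrow> nat \<Rightarrow> real"
    and eff :: "nat \<Rightarrow> nat set"
    and Y x :: "nat \<Rightarrow> nat \<Rightarrow> real"
    and nq :: "nat \<Rightarrow> nat"
    and g :: "nat \<Rightarrow> nat \<Rightarrow> real"
    and A :: "(nat \<Rightarrow> nat) set"
    and th :: "nat \<Rightarrow> (nat \<Rightarrow> nat) \<Rightarrow> real"
    and thx :: "nat \<Rightarrow> nat \<Rightarrow> (nat \<Rightarrow> nat) \<Rightarrow> real"
    and gam2 :: "nat \<Rightarrow> nat \<Rightarrow> real"
    and R2 :: "nat \<Rightarrow> real"
  defines "Q \<equiv> 2 ^ K"
    and "F \<equiv> 2 ^ K - 1"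
    and "g \<equiv> (\<lambda>f q. \<Prod>k\<in>eff f. iota q k)"
    and "A \<equiv> crfe_assignments n Q nq"
    and "th \<equiv> (\<lambda>f. fact_est K Q g n Y f)"
    and "thx \<equiv> (\<lambda>k l. fact_est K Q g n (\<lambda>i q. x i l) k)"
    and "gam2 \<equiv> (\<lambda>f k. sq_mult_corr A (th f) (thx k) L)"
    and "R2 \<equiv> (\<lambda>f. sq_mult_corr A (th f) (\<lambda>j. thx (j div L) (j mod L)) (F * L))"
  assumes K: "K \<ge> 1"
    and L: "L \<ge> 1"
    and iota: "bij_betw (\<lambda>q. restrict (iota q) {..<K}) {..<Q} ({..<K} \<rightarrow>\<^sub>E {-1, 1})"
    and eff: "bij_betw eff {..<F} {S. S \<subseteq> {..<K} \<and> S \<noteq> {}}"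
    and nq_pos: "\<forall>q<Q. nq q \<ge> 1"
    and nq_sum: "(\<Sum>q<Q. nq q) = n"
    and Sxx: "invertible_mat (fcov_xx n x L)"
    and additive: "\<forall>i<n. \<forall>j<n. \<forall>f<F. indiv_effect K Q g Y i f = indiv_effect K Q g Y j f"
    and S11_pos: "fcov n (\<lambda>i. Y i 0) (\<lambda>i. Y i 0) > 0"
  shows "(\<forall>f<F. Max (gam2 f ` {..<F}) = gam2 f f \<and> gam2 f f = R2 f
            \<and> R2 f = fproj_var n (\<lambda>i. Y i 0) x L / fcov n (\<lambda>i. Y i 0) (\<lambda>i. Y i 0))
       \<and> (\<forall>f<F. \<forall>j<F * L.
            rcov A (proj_resid A (th f) (thx f) L)
                   (proj_resid A (thx (j div L) (j mod L)) (thx f) L) = 0)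
       \<and> ((\<forall>q<Q. nq q * Q = n) \<longrightarrow> (\<forall>f<F. \<forall>k<F. k \<noteq> f \<longrightarrow> gam2 f k = 0))"
proof -
  have QQ: "Q = 2^K" using assms(1) by simp
  have FF: "F = 2^K - 1" using assms(2) by simp
  have gg: "g = (\<lambda>f q. \<Prod>k\<in>eff f. iota q k)" using assms(3) by simp
  have AA: "A = crfe_assignments n Q nq" using assms(4) by simp
  have thd: "th = (\<lambda>f. fact_est K Q g n Y f)" using assms(5) by simp
  have thxd: "thx = (\<lambda>k l. fact_est K Q g n (\<lambda>i q. x i l) k)" using assms(6) by simp
  have gam2d: "gam2 = (\<lambda>f k. sq_mult_corr A (th f) (thx k) L)" using assms(7) by simp
  have R2d: "R2 = (\<lambda>f. sq_mult_corr A (th f) (\<lambda>j. thx (j div L) (j mod L)) (F * L))" using assms(8) by simp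
  have iotaQ: "bij_betw (\<lambda>q. restrict (iota q) {..<K}) {..<2^K} ({..<K} \<rightarrow>\<^sub>E {-1, 1})"
    using iota QQ by simp
  have effF: "bij_betw eff {..<2^K-1} {S. S \<subseteq> {..<K} \<and> S \<noteq> {}}" using eff FF by simp
  have Q2: "Q \<ge> 2" using K QQ
    by (metis one_le_numeral power_increasing power_one_right)
  have F1: "F \<ge> 1" using Q2 QQ FF by simp
  have nge: "n \<ge> 2"
  proof -
    have "(\<Sum>q<Q. (1::nat)) \<le> (\<Sum>q<Q. nq q)" using nq_pos by (intro sum_mono) auto
    then show ?thesis using nq_sum Q2 by simp
  qed
  have Ane: "crfe_assignments n Q nq \<noteq> {}" by (rule crfe_nonempty[OF nq_sum])
  have nqpos: "real (nq q) > 0" if "q < Q" for q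
  proof -
    have "nq q \<ge> 1" using nq_pos that by blast
    then show ?thesis by simp
  qed
  define c where "c = (1 / 2 ^ (K - 1) :: real)"
  have cpos: "c > 0" unfolding c_def by simp
  define \<phi> where "\<phi> = (\<lambda>f q. c * g f q / real (nq q))"
  have gsq: "g f q * g f q = 1" if "f < F" "q < Q" for f q
    using g_sq[OF iotaQ effF] that gg QQ FF by simp
  have gsum0: "(\<Sum>q<Q. g f q) = 0" if "f < F" for f
    using g_sum0[OF iotaQ effF] that gg QQ FF by simp
  have grow: "(\<Sum>q<Q. g f q * g k q) = 0" if "f < F" "k < F" "f \<noteq> k" for f k
    using g_row_orth[OF iotaQ effF] that gg QQ FF by simp
  have z: "(\<Sum>q<Q. real (nq q) * \<phi> f q) = 0" if f: "f < F" for f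
  proof -
    have "(\<Sum>q<Q. real (nq q) * \<phi> f q) = (\<Sum>q<Q. c * g f q)"
      by (rule sum.cong[OF refl]) (use nqpos in \<open>auto simp: \<phi>_def\<close>)
    also have "\<dots> = c * (\<Sum>q<Q. g f q)" by (simp add: sum_distrib_left)
    finally show ?thesis using gsum0[OF f] by simp
  qed
  define d where "d = (\<lambda>q. Y 0 q - Y 0 0)"
  have Yadd: "Y i q = Y i 0 + d q" if i: "i < n" and q: "q < Q" for i q
  proof -
    define D where "D = (\<lambda>q. Y i q - Y 0 q)"
    have "\<forall>f<2^K-1. (\<Sum>q<2^K. (\<Prod>j\<in>eff f. iota q j) * D q) = 0"
    proof (intro allI impI)
      fix f :: nat assume "f < 2^K - 1"
      then have f: "f < F" using FF by simp
      have n0: "0 < n" using nge by simp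
      have "indiv_effect K Q g Y i f = indiv_effect K Q g Y 0 f" using additive i n0 f by blast
      then have "(\<Sum>q<Q. g f q * Y i q) = (\<Sum>q<Q. g f q * Y 0 q)"
        unfolding indiv_effect_def by simp
      then have "(\<Sum>q<Q. g f q * D q) = 0"
        unfolding D_def by (simp add: right_diff_distrib sum_subtractf)
      then show "(\<Sum>q<2^K. (\<Prod>j\<in>eff f. iota q j) * D q) = 0" using gg QQ by simp
    qed
    then have "D q = D 0" using additive_const[OF iotaQ effF] q QQ by blast
    then show ?thesis unfolding D_def d_def by simp
  qed
  have thx_rep: "thx k l Z = stat n (\<lambda>i. x i l) (\<phi> k) Z + 0" if Z: "Z \<in> crfe_assignments n Q nq" for k l Z
    unfolding thxd fact_est_repr[OF Z] stat_def \<phi>_def c_def by simp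
  have th_rep: "th f Z = stat n (\<lambda>i. Y i 0) (\<phi> f) Z + (\<Sum>q<Q. real (nq q) * (\<phi> f q * d q))"
    if Z: "Z \<in> crfe_assignments n Q nq" for f Z
  proof -
    have Zlt: "Z i < Q" if "i < n" for i using Z that unfolding crfe_assignments_def by auto
    have "th f Z = (\<Sum>i<n. Y i (Z i) * \<phi> f (Z i))"
      unfolding thd fact_est_repr[OF Z] \<phi>_def c_def by simp
    also have "\<dots> = (\<Sum>i<n. Y i 0 * \<phi> f (Z i) + \<phi> f (Z i) * d (Z i))"
      by (rule sum.cong[OF refl]) (simp add: Yadd Zlt algebra_simps)
    also have "\<dots> = stat n (\<lambda>i. Y i 0) (\<phi> f) Z + (\<Sum>i<n. \<phi> f (Z i) * d (Z i))"
      unfolding stat_def by (simp add: sum.distrib)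
    also have "(\<Sum>i<n. \<phi> f (Z i) * d (Z i)) = (\<Sum>q<Q. real (nq q) * (\<phi> f q * d q))"
      by (rule crfe_sum_units[OF Z])
    finally show ?thesis .
  qed
  define kap where "kap = (\<lambda>f k. \<Sum>q<Q. real (nq q) * (\<phi> f q * \<phi> k q))"
  define k0 where "k0 = (\<Sum>q<Q. c * c / real (nq q))"
  have cov1: "rcov A (th f) (thx k l) = kap f k * fcov_ux n (\<lambda>i. Y i 0) x L $ l"
    if "f < F" "k < F" "l < L" for f k l
    unfolding AA kap_def fcov_ux_def using that
    by (simp add: rcov_stat[OF nge Ane z z th_rep thx_rep])
  have cov2: "rcov A (thx k l) (thx k' m) = kap k k' * fcov_xx n x L $$ (l,m)"
    if "k < F" "k' < F" "l < L" "m < L" for k k' l m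
    unfolding AA kap_def fcov_xx_def using that
    by (simp add: rcov_stat[OF nge Ane z z thx_rep thx_rep])
  have kff: "kap f f = k0" if f: "f < F" for f
    unfolding kap_def k0_def
  proof (rule sum.cong[OF refl])
    fix q assume "q \<in> {..<Q}"
    then have q: "q < Q" by simp
    have "real (nq q) * (\<phi> f q * \<phi> f q) = c * c * (g f q * g f q) / real (nq q)"
      using nqpos[OF q] unfolding \<phi>_def by (simp add: field_simps)
    then show "real (nq q) * (\<phi> f q * \<phi> f q) = c * c / real (nq q)" using gsq[OF f q] by simp
  qed
  have k0pos: "k0 > 0" unfolding k0_def
    using Q2 nqpos cpos by (intro sum_pos) (auto simp: lessThan_empty_iff)
  have kbound: "\<bar>kap f k\<bar> \<le> k0" if f: "f < F" and k: "k < F" for f k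
  proof -
    have "\<bar>kap f k\<bar> \<le> (\<Sum>q<Q. \<bar>real (nq q) * (\<phi> f q * \<phi> k q)\<bar>)" unfolding kap_def by (rule sum_abs)
    also have "\<dots> = k0" unfolding k0_def
    proof (rule sum.cong[OF refl])
      fix q assume "q \<in> {..<Q}"
      then have q: "q < Q" by simp
      have a1: "g f q = 1 \<or> g f q = -1" using gsq[OF f q] by (simp add: square_eq_1_iff)
      have a2: "g k q = 1 \<or> g k q = -1" using gsq[OF k q] by (simp add: square_eq_1_iff)
      have a3: "\<bar>g f q * g k q\<bar> = 1" using a1 a2 by auto
      have e: "real (nq q) * (\<phi> f q * \<phi> k q) = c * c * (g f q * g k q) / real (nq q)"
        using nqpos[OF q] unfolding \<phi>_def by (simp add: field_simps)
      have "\<bar>c * c * (g f q * g k q) / real (nq q)\<bar> = c * c / real (nq q)"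
        using a3 cpos nqpos[OF q] by (simp add: abs_mult abs_divide)
      then show "\<bar>real (nq q) * (\<phi> f q * \<phi> k q)\<bar> = c * c / real (nq q)"
        unfolding e .
    qed
    finally show ?thesis .
  qed
  have ksym: "kap f k = kap k f" for f k unfolding kap_def by (simp add: mult.commute)
  have kker: "\<forall>k<F. y k = 0" if hy: "\<forall>k<F. (\<Sum>k'<F. kap k k' * y k') = 0" for y
  proof -
    define zz where "zz = (\<lambda>q. \<Sum>k<F. \<phi> k q * y k)"
    have "0 = (\<Sum>k<F. y k * (\<Sum>k'<F. kap k k' * y k'))" using hy by simp
    also have "\<dots> = (\<Sum>q<Q. real (nq q) * (zz q * zz q))"
      unfolding kap_def zz_def
      by (simp add: sum_distrib_left sum_distrib_right sum.swap[of _ "{..<F}" "{..<Q}"] mult_ac)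
    finally have S0: "(\<Sum>q<Q. real (nq q) * (zz q * zz q)) = 0" by simp
    have zz0: "zz q = 0" if q: "q < Q" for q
    proof -
      have "real (nq q) * (zz q * zz q) = 0"
        using S0 nqpos by (subst (asm) sum_nonneg_eq_0_iff) (auto simp: q)
      then show ?thesis using nqpos[OF q] by simp
    qed
    have gz: "(\<Sum>k<F. g k q * y k) = 0" if q: "q < Q" for q
    proof -
      have "zz q = (c / real (nq q)) * (\<Sum>k<F. g k q * y k)"
        unfolding zz_def \<phi>_def by (simp add: sum_distrib_left mult_ac)
      then show ?thesis using zz0[OF q] cpos nqpos[OF q] by simp
    qed
    show ?thesis
    proof (intro allI impI)
      fix k' assume k': "k' < F"
      have "0 = (\<Sum>q<Q. g k' q * (\<Sum>k<F. g k q * y k))" using gz by simp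
      also have "\<dots> = (\<Sum>k<F. y k * (\<Sum>q<Q. g k' q * g k q))"
        by (simp add: sum_distrib_left sum_distrib_right sum.swap[of _ "{..<Q}" "{..<F}"] mult_ac)
      also have "\<dots> = (\<Sum>k<F. if k = k' then y k * real Q else 0)"
      proof (rule sum.cong[OF refl])
        fix k assume "k \<in> {..<F}"
        then have k: "k < F" by simp
        show "y k * (\<Sum>q<Q. g k' q * g k q) = (if k = k' then y k * real Q else 0)"
        proof (cases "k = k'")
          case True
          have "(\<Sum>q<Q. g k' q * g k q) = (\<Sum>q<Q. 1)" using gsq[OF k'] True by simp
          then show ?thesis using True by simp
        next
          case False
          then show ?thesis using grow[OF k' k] by simp
        qed
      qed
      also have "\<dots> = y k' * real Q" using k' by simp
      finally show "y k' = 0" using Q2 by simp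
    qed
  qed
  have Sxxc: "fcov_xx n x L \<in> carrier_mat L L" by (simp add: fcov_xx_def)
  have Ssym: "fcov_xx n x L $$ (l,m) = fcov_xx n x L $$ (m,l)" if "l < L" "m < L" for l m
    using that by (simp add: fcov_xx_def fcov_sym)
  have Spsd: "0 \<le> (fcov_xx n x L *\<^sub>v w) \<bullet> w" if "w \<in> carrier_vec L" for w
    by (rule fcov_psd[OF nge that])
  have S1xc: "fcov_ux n (\<lambda>i. Y i 0) x L \<in> carrier_vec L" by (simp add: fcov_ux_def)
  have var1: "rvar A (th f) = k0 * fcov n (\<lambda>i. Y i 0) (\<lambda>i. Y i 0)" if f: "f < F" for f
    unfolding rvar_def AA using rcov_stat[OF nge Ane z[OF f] z[OF f] th_rep th_rep] kff[OF f]
    unfolding kap_def by simp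
  note ctx = F1 L Sxxc Ssym Sxx Spsd S1xc S11_pos k0pos kff ksym kker cov1 cov2 var1
  define P where "P = fproj_var n (\<lambda>i. Y i 0) x L"
  define S11 where "S11 = fcov n (\<lambda>i. Y i 0) (\<lambda>i. Y i 0)"
  have P_eq: "P = fcov_ux n (\<lambda>i. Y i 0) x L \<bullet> (the (mat_inverse (fcov_xx n x L)) *\<^sub>v fcov_ux n (\<lambda>i. Y i 0) x L)"
    unfolding P_def fproj_var_def ..
  have Pnn: "P \<ge> 0" unfolding P_eq by (rule P_nonneg[OF ctx])
  have S11p: "S11 > 0" unfolding S11_def by (rule S11_pos)
  have G: "gam2 f k = (kap f k)^2 / k0^2 * (P / S11)" if "f < F" "k < F" for f k
    unfolding gam2d P_eq S11_def using gam2_formula[OF ctx that] by simp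
  have R: "R2 f = P / S11" if "f < F" for f
    unfolding R2d P_eq S11_def using R2_formula[OF ctx that] by simp
  have Res: "rcov A (proj_resid A (th f) (thx f) L) (proj_resid A (thx (j div L) (j mod L)) (thx f) L) = 0"
    if "f < F" "j < F * L" for f j
    by (rule Res_formula[OF ctx that])
  have Gff: "gam2 f f = P / S11" if f: "f < F" for f
    using G[OF f f] kff[OF f] k0pos by simp
  have part1: "\<forall>f<F. Max (gam2 f ` {..<F}) = gam2 f f \<and> gam2 f f = R2 f
            \<and> R2 f = fproj_var n (\<lambda>i. Y i 0) x L / fcov n (\<lambda>i. Y i 0) (\<lambda>i. Y i 0)"
  proof (intro allI impI conjI)
    fix f assume f: "f < F"
    show "Max (gam2 f ` {..<F}) = gam2 f f"
    proof (rule Max_eqI)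
      show "finite (gam2 f ` {..<F})" by simp
      show "gam2 f f \<in> gam2 f ` {..<F}" using f by simp
      fix y assume "y \<in> gam2 f ` {..<F}"
      then obtain k where k: "k < F" and y: "y = gam2 f k" by auto
      have "(kap f k)^2 \<le> k0^2"
        using kbound[OF f k] k0pos by (metis abs_le_square_iff abs_of_pos)
      then have r: "(kap f k)^2 / k0^2 \<le> 1" using k0pos by simp
      have "y = (kap f k)^2 / k0^2 * (P / S11)" using y G[OF f k] by simp
      also have "\<dots> \<le> 1 * (P / S11)"
        using r Pnn S11p by (intro mult_right_mono) auto
      finally show "y \<le> gam2 f f" using Gff[OF f] by simp
    qed
    show "gam2 f f = R2 f" using Gff[OF f] R[OF f] by simp
    show "R2 f = fproj_var n (\<lambda>i. Y i 0) x L / fcov n (\<lambda>i. Y i 0) (\<lambda>i. Y i 0)"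
      using R[OF f] unfolding P_def S11_def .
  qed
  have part3: "(\<forall>q<Q. nq q * Q = n) \<longrightarrow> (\<forall>f<F. \<forall>k<F. k \<noteq> f \<longrightarrow> gam2 f k = 0)"
  proof (intro impI allI)
    assume eq: "\<forall>q<Q. nq q * Q = n"
    fix f k assume f: "f < F" and k: "k < F" and kf: "k \<noteq> f"
    have "kap f k = (\<Sum>q<Q. (c * c * real Q / real n) * (g f q * g k q))"
      unfolding kap_def
    proof (rule sum.cong[OF refl])
      fix q assume "q \<in> {..<Q}"
      then have q: "q < Q" by simp
      have nq: "real (nq q) = real n / real Q" using eq q Q2
        by (metis nonzero_mult_div_cancel_right of_nat_mult of_nat_0_eq_iff not_numeral_le_zero le_zero_eq)
      show "real (nq q) * (\<phi> f q * \<phi> k q) = c * c * real Q / real n * (g f q * g k q)"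
        using nqpos[OF q] nq unfolding \<phi>_def by (simp add: field_simps)
    qed
    also have "\<dots> = (c * c * real Q / real n) * (\<Sum>q<Q. g f q * g k q)"
      by (simp add: sum_distrib_left)
    also have "\<dots> = 0" using grow[OF f k] kf by simp
    finally show "gam2 f k = 0" using G[OF f k] by simp
  qed
  show ?thesis using part1 Res part3 by blast
qed

end
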